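(* Consider the Physarum dynamics on $G$ with arbitrary initial diameters $D_e(0)>0$. Then the dynamics are attracted by $\mathcal E^*$, i.e. $\operatorname{dist}(D(t),\mathcal E^* )\to 0$ as $t\to\infty$ (distance measured in any $L_p$-norm on $\mathbb R^E$). If the shortest $s_0$-$s_1$ path is unique, then $D(t)$ converges to the vector that equals $1$ on every edge of the shortest $s_0$-$s_1$ path and $0$ on every other edge.
   Context: Let $G=(N,E)$ be a finite connected undirected graph with $n=|N|$ vertices and $m=|E|$ edges, and two distinct vertices $s_0$ (source) and $s_1$ (sink). Each edge $e$ has a fixed length $L_e>0$. Each edge has a time-dependent diameter $D_e(t)$ with $D_e(0)>0$, and resistance $R_e=L_e/D_e$. At each time $t$, the vertex potentials $p_v$ (normalized by $p_{s_1}=0$) are the solution of $\sum_{u\in\delta(v)}(p_v-p_u)/R_{uv}=b_v$ for all $v$, where $\delta(v)$ is the set of neighbours of $v$, $b_{s_0}=1$, $b_{s_1}=-1$, $b_v=0$ otherwise; for an edge $e=\{u,v\}$ with an arbitrarily fixed orientation $(u,v)$ the current is $Q_e=(p_u-p_v)/R_e=D_e(p_u-p_v)/L_e$ (so $Q$ is the electrical $s_0$-$s_1$ flow of value 1). The diameters evolve by $\dot D_e(t)=|Q_e(t)|-D_e(t)$ for all $e\in E$ (the "Physarum dynamics"). Let $L^*$ be the length of a shortest $s_0$-$s_1$ path (length of a path = sum of $L_e$ over its edges), let $E_0$ be the set of edges lying on at least one shortest $s_0$-$s_1$ path, and $G_0=(N,E_0)$. Each edge $\{u,v\}\in E_0$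 is oriented from the endpoint farther from $s_1$ to the one nearer to $s_1$ (shortest-path distance). $\mathcal E^*\subseteq\mathbb R^E_{\ge0}$ is the set of vectors $x$ with $x_e=0$ for $e\notin E_0$ such that $x$, viewed on the oriented edges of $E_0$, is an $s_0$-$s_1$ flow of value one (equivalently, the set of minimum-cost $s_0$-$s_1$ flows of value one, cost $\sum_e L_e x_e$). *)

theory Defs
  imports Complex_Main
begin

definition simple_graph :: "'v set \<Rightarrow> 'v set set \<Rightarrow> bool" where
  "simple_graph N E \<longleftrightarrow> finite N \<and>
     (\<forall>e\<in>E. \<exists>u v. u \<noteq> v \<and> u \<in> N \<and> v \<in> N \<and> e = {u, v})"

definition walk :: "'v set set \<Rightarrow> 'v list \<Rightarrow> bool" where
  "walk E xs \<longleftrightarrow> xs \<noteq> [] \<and> (\<forall>i < length xs - 1. {xs ! i, xs ! Suc i} \<in> E)"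

definition path_edges :: "'v list \<Rightarrow> 'v set set" where
  "path_edges xs = {{xs ! i, xs ! Suc i} | i. i < length xs - 1}"

definition path_len :: "('v set \<Rightarrow> real) \<Rightarrow> 'v list \<Rightarrow> real" where
  "path_len L xs = (\<Sum>i < length xs - 1. L {xs ! i, xs ! Suc i})"

definition spath :: "'v set set \<Rightarrow> 'v \<Rightarrow> 'v \<Rightarrow> 'v list \<Rightarrow> bool" where
  "spath E v w xs \<longleftrightarrow> walk E xs \<and> distinct xs \<and> hd xs = v \<and> last xs = w"

definition sdist :: "'v set set \<Rightarrow> ('v set \<Rightarrow> real) \<Rightarrow> 'v \<Rightarrow> 'v \<Rightarrow> real" where
  "sdist E L v w = Inf (path_len L ` {xs. spath E v w xs})"

definition connected_graph :: "'v set \<Rightarrow> 'v set set \<Rightarrow> bool" where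
  "connected_graph N E \<longleftrightarrow> (\<forall>u\<in>N. \<forall>v\<in>N. \<exists>xs. spath E u v xs)"

definition shortest_path :: "'v set set \<Rightarrow> ('v set \<Rightarrow> real) \<Rightarrow> 'v \<Rightarrow> 'v \<Rightarrow> 'v list \<Rightarrow> bool" where
  "shortest_path E L s0 s1 xs \<longleftrightarrow> spath E s0 s1 xs \<and> path_len L xs = sdist E L s0 s1"

definition E0 :: "'v set set \<Rightarrow> ('v set \<Rightarrow> real) \<Rightarrow> 'v \<Rightarrow> 'v \<Rightarrow> 'v set set" where
  "E0 E L s0 s1 = {e \<in> E. \<exists>xs. shortest_path E L s0 s1 xs \<and> e \<in> path_edges xs}"

definition bvec :: "'v \<Rightarrow> 'v \<Rightarrow> 'v \<Rightarrow> real" where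
  "bvec s0 s1 v = (if v = s0 then 1 else if v = s1 then -1 else 0)"

text \<open>Set of minimum-cost flows: flows of value one on G0, each edge oriented from the
  endpoint farther from s1 to the endpoint nearer to s1.\<close>
definition Estar :: "'v set \<Rightarrow> 'v set set \<Rightarrow> ('v set \<Rightarrow> real) \<Rightarrow> 'v \<Rightarrow> 'v \<Rightarrow> ('v set \<Rightarrow> real) set" where
  "Estar N E L s0 s1 = {x. (\<forall>e. x e \<ge> 0) \<and> (\<forall>e. e \<notin> E0 E L s0 s1 \<longrightarrow> x e = 0) \<and>
     (\<forall>w\<in>N. (\<Sum>u \<in> {u \<in> N. {w, u} \<in> E0 E L s0 s1}.
          (if sdist E L u s1 < sdist E L w s1 then x {w, u} else - x {w, u})) = bvec s0 s1 w)}"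

text \<open>Potentials: solution of the Kirchhoff equations with conductances D_e/L_e,
  normalised by p s1 = 0.\<close>
definition is_potential :: "'v set \<Rightarrow> 'v set set \<Rightarrow> ('v set \<Rightarrow> real) \<Rightarrow> ('v set \<Rightarrow> real)
    \<Rightarrow> 'v \<Rightarrow> 'v \<Rightarrow> ('v \<Rightarrow> real) \<Rightarrow> bool" where
  "is_potential N E L d s0 s1 p \<longleftrightarrow> p s1 = 0 \<and>
     (\<forall>v\<in>N. (\<Sum>u \<in> {u \<in> N. {u, v} \<in> E}. (p v - p u) * d {u, v} / L {u, v}) = bvec s0 s1 v)"

text \<open>Arbitrarily fixed orientation (u,v) of an edge e = {u,v}.\<close>
definition orient :: "'v set \<Rightarrow> 'v \<times> 'v" where
  "orient e = (SOME uv. e = {fst uv, snd uv} \<and> fst uv \<noteq> snd uv)"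

definition current :: "('v set \<Rightarrow> real) \<Rightarrow> ('v set \<Rightarrow> real) \<Rightarrow> ('v \<Rightarrow> real) \<Rightarrow> 'v set \<Rightarrow> real" where
  "current L d p e = d e * (p (fst (orient e)) - p (snd (orient e))) / L e"

definition lp_setdist :: "real \<Rightarrow> 'e set \<Rightarrow> ('e \<Rightarrow> real) \<Rightarrow> ('e \<Rightarrow> real) set \<Rightarrow> real" where
  "lp_setdist q E y S = Inf ((\<lambda>x. (\<Sum>e\<in>E. \<bar>y e - x e\<bar> powr q) powr (1 / q)) ` S)"

definition linf_setdist :: "'e set \<Rightarrow> ('e \<Rightarrow> real) \<Rightarrow> ('e \<Rightarrow> real) set \<Rightarrow> real" where
  "linf_setdist E y S = Inf ((\<lambda>x. Max ((\<lambda>e. \<bar>y e - x e\<bar>) ` E)) ` S)"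

end

theory Submission
  imports Defs
begin


fun plen :: "('v set \<Rightarrow> real) \<Rightarrow> 'v list \<Rightarrow> real" where
  "plen L [] = 0" | "plen L [a] = 0" | "plen L (a#b#xs) = L {a,b} + plen L (b#xs)"

fun wk :: "'v set set \<Rightarrow> 'v list \<Rightarrow> bool" where
  "wk E [] = False" | "wk E [a] = True" | "wk E (a#b#xs) = ({a,b} \<in> E \<and> wk E (b#xs))"

lemma path_len_plen: "path_len L xs = plen L xs"
proof (induction L xs rule: plen.induct)
  case (3 L a b xs)
  have "path_len L (a#b#xs) = (\<Sum>i<Suc (length xs). L {(a#b#xs) ! i, (a#b#xs) ! Suc i})"
    by (simp add: path_len_def)
  also have "\<dots> = L {a,b} + (\<Sum>i<length xs. L {(b#xs) ! i, (b#xs) ! Suc i})"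
    by (subst sum.lessThan_Suc_shift) simp
  also have "\<dots> = L {a,b} + path_len L (b#xs)" by (simp add: path_len_def)
  finally show ?case using 3 by simp
qed (auto simp: path_len_def)

lemma walk_wk: "walk E xs = wk E xs"
proof (induction E xs rule: wk.induct)
  case (3 E a b xs)
  have "walk E (a#b#xs) \<longleftrightarrow> (\<forall>i<Suc (length xs). {(a#b#xs) ! i, (a#b#xs) ! Suc i} \<in> E)"
    by (simp add: walk_def)
  also have "\<dots> \<longleftrightarrow> {a,b} \<in> E \<and> (\<forall>i<length xs. {(b#xs) ! i, (b#xs) ! Suc i} \<in> E)"
    by (auto simp: less_Suc_eq_0_disj)
  also have "\<dots> \<longleftrightarrow> {a,b} \<in> E \<and> walk E (b#xs)" by (simp add: walk_def)
  finally show ?case using 3 by simp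
qed (auto simp: walk_def)

lemma path_edges_Cons2: "path_edges (a#b#xs) = insert {a,b} (path_edges (b#xs))"
proof -
  have e: "path_edges ys = (\<lambda>i. {ys ! i, ys ! Suc i}) ` {..<length ys - 1}" for ys :: "'a list"
    by (auto simp: path_edges_def)
  show ?thesis unfolding e
    by (simp add: lessThan_Suc_eq_insert_0 image_image del: lessThan_Suc)
qed

lemma path_edges_single[simp]: "path_edges [a] = {}" "path_edges [] = {}"
  by (auto simp: path_edges_def)

lemma plen_append: "xs \<noteq> [] \<Longrightarrow> ys \<noteq> [] \<Longrightarrow>
   plen L (xs @ ys) = plen L xs + L {last xs, hd ys} + plen L ys"
proof (induction L xs rule: plen.induct)
  case (2 L a) then show ?case by (cases ys) auto
next
  case (3 L a b xs) then show ?case by simp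
qed simp

lemma wk_append: "xs \<noteq> [] \<Longrightarrow> ys \<noteq> [] \<Longrightarrow>
   wk E (xs @ ys) \<longleftrightarrow> wk E xs \<and> {last xs, hd ys} \<in> E \<and> wk E ys"
proof (induction E xs rule: wk.induct)
  case (2 E a) then show ?case by (cases ys) auto
next
  case (3 E a b xs) then show ?case by auto
qed simp

lemma plen_rev: "plen L (rev xs) = plen L xs"
proof (induction L xs rule: plen.induct)
  case (3 L a b xs)
  have "plen L (rev (a#b#xs)) = plen L (rev (b#xs) @ [a])" by simp
  also have "\<dots> = plen L (rev (b#xs)) + L {b,a}"
    by (subst plen_append) (auto simp: last_rev)
  finally show ?case using 3 by (simp add: insert_commute)
qed auto

lemma wk_rev: "wk E (rev xs) = wk E xs"
proof (induction E xs rule: wk.induct)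
  case (3 E a b xs)
  have "wk E (rev (a#b#xs)) = wk E (rev (b#xs) @ [a])" by simp
  also have "\<dots> = (wk E (rev (b#xs)) \<and> {b,a} \<in> E)"
    by (subst wk_append) (auto simp: last_rev)
  finally show ?case using 3 by (auto simp: insert_commute)
qed auto

lemma spath_rev: "spath E v w xs \<Longrightarrow> spath E w v (rev xs)"
  by (auto simp: spath_def walk_wk wk_rev hd_rev last_rev)

lemma plen_Cons_ge: "plen L (a # xs) \<ge> plen L xs" if "wk E (a#xs)" "\<forall>e\<in>E. L e > 0"
  using that by (cases xs) (auto intro: less_imp_le)

lemma plen_nonneg: "wk E xs \<Longrightarrow> \<forall>e\<in>E. L e > 0 \<Longrightarrow> plen L xs \<ge> 0"
  by (induction E xs rule: wk.induct) (auto intro!: add_nonneg_nonneg less_imp_le)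

lemma plen_pos: "wk E xs \<Longrightarrow> \<forall>e\<in>E. L e > 0 \<Longrightarrow> length xs \<ge> 2 \<Longrightarrow> plen L xs > 0"
proof (induction E xs rule: wk.induct)
  case (3 E a b xs)
  then show ?case using plen_nonneg[of E "b#xs" L] by (auto intro!: add_pos_nonneg)
qed auto

lemma plen_drop_le: "wk E xs \<Longrightarrow> \<forall>e\<in>E. L e > 0 \<Longrightarrow> k < length xs \<Longrightarrow> plen L (drop k xs) \<le> plen L xs"
proof (induction k arbitrary: xs)
  case (Suc k)
  then obtain a ys where xs: "xs = a # ys" by (cases xs) auto
  with Suc have "ys \<noteq> []" by auto
  then have "wk E ys" using Suc.prems xs by (cases ys) auto
  then have "plen L (drop k ys) \<le> plen L ys" using Suc xs by auto
  moreover have "plen L ys \<le> plen L (a#ys)" using plen_Cons_ge[of E a ys L] Suc xs by auto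
  ultimately show ?case using xs by simp
qed simp

lemma wk_drop: "wk E xs \<Longrightarrow> k < length xs \<Longrightarrow> wk E (drop k xs)"
proof (induction k arbitrary: xs)
  case (Suc k)
  then obtain a ys where xs: "xs = a # ys" by (cases xs) auto
  with Suc have "ys \<noteq> []" by auto
  then have "wk E ys" using Suc.prems xs by (cases ys) auto
  then show ?case using Suc xs by auto
qed simp

lemma wk_take: "wk E xs \<Longrightarrow> 0 < k \<Longrightarrow> wk E (take k xs)"
proof (induction E xs arbitrary: k rule: wk.induct)
  case (2 E a) then show ?case by (cases k) auto
next
  case (3 E a b xs)
  then obtain k' where k: "k = Suc k'" by (cases k) auto
  show ?case
  proof (cases k')
    case 0 then show ?thesis using k by simp
  next
    case (Suc k'')
    have "wk E (take k' (b#xs))" using 3(1)[of k'] 3(2-) Suc by auto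
    then have "wk E (b # take k'' xs)" using Suc by simp
    then show ?thesis using 3 k Suc by simp
  qed
qed simp


locale gctx =
  fixes N :: "'v set" and E :: "'v set set" and L :: "'v set \<Rightarrow> real"
  assumes graph: "simple_graph N E" and conn: "connected_graph N E"
    and Lpos: "\<forall>e\<in>E. L e > 0"
begin

lemma finN: "finite N" using graph by (simp add: simple_graph_def)

lemma edge_ends: assumes "{a,b} \<in> E" shows "a \<noteq> b" "a \<in> N" "b \<in> N"
proof -
  obtain u v where "u \<noteq> v" "u \<in> N" "v \<in> N" "{a,b} = {u,v}"
    using graph assms unfolding simple_graph_def by blast
  then show "a \<noteq> b" "a \<in> N" "b \<in> N" by (auto simp: doubleton_eq_iff)
qed

lemma edge_in_E: "e \<in> E \<Longrightarrow> \<exists>a b. e = {a,b} \<and> a \<noteq> b \<and> a \<in> N \<and> b \<in> N"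
  using graph unfolding simple_graph_def by blast

lemma finE: "finite E"
proof -
  have "E \<subseteq> Pow N" using edge_in_E by blast
  then show ?thesis using finN by (meson finite_Pow_iff finite_subset)
qed

lemma Lpos': "{a,b} \<in> E \<Longrightarrow> L {a,b} > 0" using Lpos by blast

lemma wk_set: "wk E xs \<Longrightarrow> length xs \<ge> 2 \<Longrightarrow> set xs \<subseteq> N"
proof (induction xs rule: induct_list012)
  case (3 a b xs)
  then show ?case
  proof (cases xs)
    case Nil then show ?thesis using 3 edge_ends by auto
  next
    case (Cons c ys) then show ?thesis using 3 edge_ends by auto
  qed
qed auto

lemma spath_set: "spath E v w xs \<Longrightarrow> v \<in> N \<Longrightarrow> set xs \<subseteq> N"
proof -
  assume s: "spath E v w xs" and v: "v \<in> N"
  show ?thesis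
  proof (cases "length xs \<ge> 2")
    case True then show ?thesis using s wk_set by (auto simp: spath_def walk_wk)
  next
    case False
    then obtain a where "xs = [a]" using s
      by (cases xs) (auto simp: spath_def walk_def, metis Suc_1 Suc_le_eq length_greater_0_conv neq_Nil_conv not_less_eq_eq)
    then show ?thesis using s v by (auto simp: spath_def)
  qed
qed

lemma fin_spaths: assumes v: "v \<in> N" shows "finite {xs. spath E v w xs}"
proof (rule finite_subset[OF _ finite_subset_distinct[OF finN]])
  show "{xs. spath E v w xs} \<subseteq> {xs. set xs \<subseteq> N \<and> distinct xs}"
  proof
    fix xs assume "xs \<in> {xs. spath E v w xs}"
    then have s: "spath E v w xs" by simp
    then have "set xs \<subseteq> N" using spath_set v by blast
    moreover have "distinct xs" using s by (simp add: spath_def)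
    ultimately show "xs \<in> {xs. set xs \<subseteq> N \<and> distinct xs}" by simp
  qed
qed

lemma ex_spath: "v \<in> N \<Longrightarrow> w \<in> N \<Longrightarrow> \<exists>xs. spath E v w xs"
  using conn by (auto simp: connected_graph_def)

lemma spath_len_nonneg: "spath E v w xs \<Longrightarrow> plen L xs \<ge> 0"
  using plen_nonneg Lpos by (auto simp: spath_def walk_wk)

lemma sdist_le: "v \<in> N \<Longrightarrow> spath E v w xs \<Longrightarrow> sdist E L v w \<le> plen L xs"
  unfolding sdist_def path_len_plen[abs_def]
  by (rule cInf_lower) (auto intro!: bdd_below_finite fin_spaths)

lemma sdist_attained: assumes "v \<in> N" "w \<in> N"
  shows "\<exists>xs. spath E v w xs \<and> plen L xs = sdist E L v w"
proof -
  let ?S = "plen L ` {xs. spath E v w xs}"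
  have "finite ?S" "?S \<noteq> {}" using fin_spaths ex_spath assms by auto
  then have "Inf ?S \<in> ?S" using cInf_eq_Min Min_in by metis
  then show ?thesis unfolding sdist_def path_len_plen[abs_def] by auto
qed

lemma sdist_nonneg: "v \<in> N \<Longrightarrow> w \<in> N \<Longrightarrow> sdist E L v w \<ge> 0"
  using sdist_attained spath_len_nonneg by metis

lemma sdist_sym: assumes "v \<in> N" "w \<in> N" shows "sdist E L v w = sdist E L w v"
proof -
  have "sdist E L v w \<le> sdist E L w v" if vN: "v \<in> N" and wN: "w \<in> N" for v w
  proof -
    obtain xs where "spath E w v xs" "plen L xs = sdist E L w v" using sdist_attained[of w v] vN wN by metis
    then show ?thesis using sdist_le[OF vN spath_rev] plen_rev by metis
  qed
  then show ?thesis using assms by (meson antisym)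
qed

lemma sdist_self: "v \<in> N \<Longrightarrow> sdist E L v v = 0"
proof -
  assume v: "v \<in> N"
  have "spath E v v [v]" by (simp add: spath_def walk_def)
  then have "sdist E L v v \<le> 0" using sdist_le[OF v] by force
  then show ?thesis using sdist_nonneg v by force
qed

lemma tri: assumes e: "{a,b} \<in> E" and z: "z \<in> N"
  shows "sdist E L a z \<le> L {a,b} + sdist E L b z"
proof -
  have a: "a \<in> N" and b: "b \<in> N" and ab: "a \<noteq> b" using edge_ends e by auto
  obtain xs where xs: "spath E b z xs" "plen L xs = sdist E L b z"
    using sdist_attained b z by metis
  show ?thesis
  proof (cases "a \<in> set xs")
    case True
    then obtain k where k: "k < length xs" "xs ! k = a" by (meson in_set_conv_nth)
    have wx: "wk E xs" using xs by (auto simp: spath_def walk_wk)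
    have "spath E a z (drop k xs)"
      using xs k wk_drop[OF wx k(1)] by (auto simp: spath_def walk_wk hd_drop_conv_nth)
    then have "sdist E L a z \<le> plen L (drop k xs)" using sdist_le a by blast
    also have "\<dots> \<le> plen L xs" using plen_drop_le[OF wx Lpos k(1)] .
    finally show ?thesis using xs Lpos e by (smt (verit))
  next
    case False
    have xne: "xs \<noteq> []" and hx: "hd xs = b" using xs by (auto simp: spath_def walk_def)
    then obtain ys where ys: "xs = b # ys" by (cases xs) auto
    have "spath E a z (a # xs)"
      using xs False e ys by (auto simp: spath_def walk_wk)
    then have "sdist E L a z \<le> plen L (a # xs)" using sdist_le a by blast
    also have "\<dots> = L {a,b} + plen L xs" using ys by simp
    finally show ?thesis using xs by simp
  qed
qed

lemma walk_bound: "wk E xs \<Longrightarrow> z \<in> N \<Longrightarrow> hd xs \<in> N \<Longrightarrow>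
    sdist E L (hd xs) z \<le> plen L xs + sdist E L (last xs) z"
proof (induction xs rule: induct_list012)
  case (3 a b xs)
  have "sdist E L a z \<le> L {a,b} + sdist E L b z" using tri 3 by auto
  moreover have "sdist E L b z \<le> plen L (b#xs) + sdist E L (last (b#xs)) z"
    using 3 edge_ends by auto
  ultimately show ?case by simp
qed auto

end


lemma plen_split: "plen L (xs @ y # zs) = plen L (xs @ [y]) + plen L (y # zs)"
proof (cases zs)
  case Nil then show ?thesis by (cases xs) (auto simp: plen_append)
next
  case (Cons z zs')
  have "plen L ((xs @ [y]) @ zs) = plen L (xs @ [y]) + L {y, z} + plen L zs"
    by (subst plen_append) (auto simp: Cons)
  then show ?thesis using Cons by simp
qed

lemma wk_split: "wk E (xs @ y # zs) \<longleftrightarrow> wk E (xs @ [y]) \<and> wk E (y # zs)"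
proof (cases zs)
  case Nil then show ?thesis by (cases xs) (auto simp: wk_append)
next
  case (Cons z zs')
  have "wk E ((xs @ [y]) @ zs) = (wk E (xs @ [y]) \<and> {y, z} \<in> E \<and> wk E zs)"
    by (subst wk_append) (auto simp: Cons)
  then show ?thesis using Cons by simp
qed

lemma path_edges_append: assumes "xs \<noteq> []" "ys \<noteq> []" shows "{last xs, hd ys} \<in> path_edges (xs @ ys)"
proof -
  obtain y ys' where ys: "ys = y # ys'" using assms by (cases ys) auto
  have l: "length xs > 0" using assms by simp
  have "(xs @ ys) ! (length xs - 1) = last xs" using assms by (simp add: nth_append last_conv_nth)
  moreover have "(xs @ ys) ! Suc (length xs - 1) = hd ys" using l ys by (simp add: nth_append)
  moreover have "length xs - 1 < length (xs @ ys) - 1" using assms ys by (cases xs) auto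
  ultimately have "{last xs, hd ys} = {(xs @ ys) ! (length xs - 1), (xs @ ys) ! Suc (length xs - 1)}
      \<and> length xs - 1 < length (xs @ ys) - 1" by simp
  then show ?thesis unfolding path_edges_def by blast
qed

lemma path_edges_nth: assumes "e \<in> path_edges xs" shows "\<exists>i. Suc i < length xs \<and> e = {xs ! i, xs ! Suc i}"
proof -
  obtain i where "i < length xs - 1" "e = {xs ! i, xs ! Suc i}" using assms by (auto simp: path_edges_def)
  then show ?thesis by (intro exI[of _ i]) auto
qed

locale gctx2 = gctx +
  fixes s0 s1 :: 'v
  assumes s0N: "s0 \<in> N" and s1N: "s1 \<in> N" and s01: "s0 \<noteq> s1"
begin

definition "dd v = sdist E L v s1"
definition "d0 v = sdist E L v s0"
definition "Ls = sdist E L s0 s1"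
definition "TT a b \<longleftrightarrow> {a,b} \<in> E \<and> dd a - dd b = L {a,b} \<and> d0 b - d0 a = L {a,b}"

lemma dd_s1: "dd s1 = 0" using sdist_self s1N by (simp add: dd_def)
lemma d0_s0: "d0 s0 = 0" using sdist_self s0N by (simp add: d0_def)
lemma dd_s0: "dd s0 = Ls" by (simp add: dd_def Ls_def)
lemma d0_s1: "d0 s1 = Ls" using sdist_sym s0N s1N by (simp add: d0_def Ls_def)

lemma dd_lip: "{a,b} \<in> E \<Longrightarrow> \<bar>dd a - dd b\<bar> \<le> L {a,b}"
  using tri[of a b s1] tri[of b a s1] s1N by (auto simp: dd_def insert_commute)
lemma d0_lip: "{a,b} \<in> E \<Longrightarrow> \<bar>d0 a - d0 b\<bar> \<le> L {a,b}"
  using tri[of a b s0] tri[of b a s0] s0N by (auto simp: d0_def insert_commute)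

lemma Ls_nonneg: "Ls \<ge> 0" using sdist_nonneg s0N s1N by (simp add: Ls_def)

lemma hsum: assumes v: "v \<in> N" shows "d0 v + dd v \<ge> Ls"
proof -
  obtain xs where xs: "spath E s0 v xs" "plen L xs = sdist E L s0 v"
    using sdist_attained s0N v by metis
  have "sdist E L (hd xs) s1 \<le> plen L xs + sdist E L (last xs) s1"
    using walk_bound[of xs s1] xs s0N s1N by (auto simp: spath_def walk_wk)
  then show ?thesis using xs sdist_sym[OF s0N v] by (auto simp: spath_def dd_def d0_def Ls_def)
qed

lemma sp_TT: assumes sp: "shortest_path E L s0 s1 xs" and i: "Suc i < length xs"
  shows "TT (xs ! i) (xs ! Suc i) \<and> d0 (xs ! i) + dd (xs ! i) = Ls"
proof -
  define a b where "a = xs ! i" and "b = xs ! Suc i"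
  define P1 P2 where "P1 = take (Suc i) xs" and "P2 = drop (Suc i) xs"
  have xs: "xs = P1 @ P2" by (simp add: P1_def P2_def)
  have P1ne: "P1 \<noteq> []" and P2ne: "P2 \<noteq> []" using i by (auto simp: P1_def P2_def)
  have lP1: "last P1 = a" using i by (simp add: P1_def a_def take_Suc_conv_app_nth)
  have hP2: "hd P2 = b" using i by (simp add: P2_def b_def hd_drop_conv_nth)
  have wxs: "wk E xs" and hx: "hd xs = s0" and lx: "last xs = s1" and pl: "plen L xs = Ls"
    using sp by (auto simp: shortest_path_def spath_def walk_wk path_len_plen Ls_def)
  have w12: "wk E P1" "wk E P2" "{a,b} \<in> E" using wk_append[OF P1ne P2ne] wxs xs lP1 hP2 by auto
  have hP1: "hd P1 = s0" using hx xs P1ne by simp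
  have lP2: "last P2 = s1" using lx xs P2ne by simp
  have aN: "a \<in> N" and bN: "b \<in> N" using edge_ends w12(3) by auto
  have "sdist E L (hd (rev P1)) s0 \<le> plen L (rev P1) + sdist E L (last (rev P1)) s0"
    using walk_bound[of "rev P1" s0] w12 wk_rev s0N aN P1ne lP1 by (auto simp: hd_rev)
  then have b1: "d0 a \<le> plen L P1" using lP1 hP1 P1ne d0_s0 by (simp add: hd_rev last_rev plen_rev d0_def)
  have "sdist E L (hd P2) s1 \<le> plen L P2 + sdist E L (last P2) s1"
    using walk_bound[of P2 s1] w12 s1N bN hP2 by auto
  then have b2: "dd b \<le> plen L P2" using hP2 lP2 dd_s1 by (simp add: dd_def)
  have tot: "Ls = plen L P1 + L {a,b} + plen L P2" using pl xs plen_append[OF P1ne P2ne] lP1 hP2 by simp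
  have t1: "dd a \<le> L {a,b} + dd b" using tri[OF w12(3) s1N] by (simp add: dd_def)
  have t2: "d0 b \<le> L {a,b} + d0 a" using tri[of b a s0] w12(3) s0N by (simp add: d0_def insert_commute)
  have h1: "Ls \<le> d0 a + dd a" using hsum aN by simp
  have h2: "Ls \<le> d0 b + dd b" using hsum bN by simp
  have "TT a b" using w12(3) b1 b2 tot t1 t2 h1 h2 by (simp add: TT_def)
  moreover have "d0 a + dd a = Ls" using b1 b2 tot t1 h1 by linarith
  ultimately show ?thesis using a_def b_def by blast
qed

lemma E0_T: assumes e: "e \<in> E0 E L s0 s1"
  shows "\<exists>a b. e = {a,b} \<and> TT a b \<and> d0 a + dd a = Ls"
proof -
  obtain xs where sp: "shortest_path E L s0 s1 xs" and ep: "e \<in> path_edges xs"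
    using e by (auto simp: E0_def)
  obtain i where i: "Suc i < length xs" "e = {xs ! i, xs ! Suc i}" using path_edges_nth[OF ep] by blast
  then show ?thesis using sp_TT[OF sp i(1)] by blast
qed

lemma tight_distinct: assumes w: "wk E W" and hW: "hd W \<in> N" and lW: "last W = s1"
  and pl: "plen L W = dd (hd W)"
  shows "distinct W"
proof (rule ccontr)
  assume "\<not> distinct W"
  then obtain xs ys zs y where W: "W = xs @ [y] @ ys @ [y] @ zs" using not_distinct_decomp by blast
  let ?W' = "xs @ y # zs"
  have W2: "W = xs @ y # (ys @ y # zs)" using W by simp
  have sp1: "plen L W = plen L (xs @ [y]) + plen L (y # (ys @ y # zs))"
    unfolding W2 by (rule plen_split)
  have sp2: "plen L ((y # ys) @ y # zs) = plen L ((y # ys) @ [y]) + plen L (y # zs)"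
    by (rule plen_split)
  have pW: "plen L W = plen L (xs @ [y]) + plen L (y # ys @ [y]) + plen L (y # zs)"
    using sp1 sp2 by simp
  have sw1: "wk E W = (wk E (xs @ [y]) \<and> wk E (y # (ys @ y # zs)))"
    unfolding W2 by (rule wk_split)
  have sw2: "wk E ((y # ys) @ y # zs) = (wk E ((y # ys) @ [y]) \<and> wk E (y # zs))"
    by (rule wk_split)
  have wW: "wk E (xs @ [y])" "wk E (y # ys @ [y])" "wk E (y # zs)"
    using w sw1 sw2 by simp_all
  have pos: "plen L (y # ys @ [y]) > 0" using plen_pos[OF wW(2) Lpos] by simp
  have wW': "wk E ?W'" using wW wk_split[of E xs y zs] by simp
  have pW': "plen L ?W' = plen L (xs @ [y]) + plen L (y # zs)" by (rule plen_split)
  have hd': "hd ?W' = hd W" using W by (cases xs) auto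
  have last': "last ?W' = last W" using W by (cases zs) auto
  have "sdist E L (hd ?W') s1 \<le> plen L ?W' + sdist E L (last ?W') s1"
    using walk_bound[OF wW' s1N] hd' hW by simp
  then have "dd (hd W) \<le> plen L ?W'" using hd' last' lW dd_s1 by (simp add: dd_def)
  then show False using pW pW' pos pl by linarith
qed

lemma T_E0: assumes T: "TT a b" and h: "d0 a + dd a = Ls" shows "{a,b} \<in> E0 E L s0 s1"
proof -
  have eE: "{a,b} \<in> E" using T by (simp add: TT_def)
  have aN: "a \<in> N" and bN: "b \<in> N" using edge_ends eE by auto
  obtain P1 where P1: "spath E s0 a P1" "plen L P1 = sdist E L s0 a"
    using sdist_attained s0N aN by metis
  obtain P2 where P2: "spath E b s1 P2" "plen L P2 = sdist E L b s1"
    using sdist_attained s1N bN by metis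
  have ne: "P1 \<noteq> []" "P2 \<noteq> []" using P1 P2 by (auto simp: spath_def walk_def)
  have l1: "last P1 = a" and h2: "hd P2 = b" and h1: "hd P1 = s0" and l2: "last P2 = s1"
    using P1 P2 by (auto simp: spath_def)
  let ?W = "P1 @ P2"
  have wW: "wk E ?W" using wk_append[OF ne] P1 P2 eE l1 h2 by (auto simp: spath_def walk_wk)
  have pW: "plen L ?W = Ls"
    using plen_append[OF ne, of L] P1 P2 l1 h2 T h sdist_sym[OF s0N aN]
    by (simp add: TT_def dd_def d0_def)
  have hW: "hd ?W = s0" and lW: "last ?W = s1" using ne h1 l2 by auto
  have "distinct ?W" using tight_distinct[OF wW] hW lW pW s0N dd_s0 by simp
  then have "shortest_path E L s0 s1 ?W"
    using wW hW lW pW by (simp add: shortest_path_def spath_def walk_wk path_len_plen Ls_def)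
  moreover have "{a,b} \<in> path_edges ?W" using path_edges_append[OF ne] l1 h2 by simp
  ultimately show ?thesis using eE by (auto simp: E0_def)
qed

lemma TT_asym: "TT a b \<Longrightarrow> \<not> TT b a"
  using Lpos by (auto simp: TT_def insert_commute)

lemma TT_h: "TT a b \<Longrightarrow> d0 a + dd a = d0 b + dd b"
  by (auto simp: TT_def)

end


context gctx
begin

definition "nbr w = {u \<in> N. {w,u} \<in> E}"
definition "arcs = Sigma N nbr"

lemma fin_nbr: "finite (nbr w)" using finN by (simp add: nbr_def)
lemma fin_arcs: "finite arcs" using finN fin_nbr by (simp add: arcs_def)
lemma arcs_iff: "(w,u) \<in> arcs \<longleftrightarrow> {w,u} \<in> E"
  using edge_ends by (auto simp: arcs_def nbr_def)
lemma arcs_swap: "(w,u) \<in> arcs \<Longrightarrow> (u,w) \<in> arcs"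
  by (simp add: arcs_iff insert_commute)

lemma sum_arcs_swap: "(\<Sum>(w,u)\<in>arcs. g w u) = (\<Sum>(w,u)\<in>arcs. g u w)"
  by (rule sum.reindex_bij_witness[where i = "\<lambda>(a,b). (b,a)" and j = "\<lambda>(a,b). (b,a)"])
     (auto intro: arcs_swap)

lemma sum_arcs_Sigma: "(\<Sum>(w,u)\<in>arcs. g w u) = (\<Sum>w\<in>N. \<Sum>u\<in>nbr w. g w u)"
  unfolding arcs_def by (rule sum.Sigma[symmetric]) (auto simp: finN fin_nbr)

lemma edge_arc_sum: "(\<Sum>e\<in>E. (h e::real)) = (\<Sum>(w,u)\<in>arcs. h {w,u}) / 2"
proof -
  have img: "(\<lambda>(w,u). {w,u}) ` arcs = E"
  proof
    show "(\<lambda>(w,u). {w,u}) ` arcs \<subseteq> E" using arcs_iff by auto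
    show "E \<subseteq> (\<lambda>(w,u). {w,u}) ` arcs"
    proof
      fix e assume "e \<in> E"
      then obtain a b where "e = {a,b}" "{a,b} \<in> E" using edge_in_E by blast
      then show "e \<in> (\<lambda>(w,u). {w,u}) ` arcs" using arcs_iff by (auto intro!: image_eqI[of _ _ "(a,b)"])
    qed
  qed
  have fib: "(\<Sum>x\<in>{x \<in> arcs. (\<lambda>(w,u). {w,u}) x = e}. (\<lambda>(w,u). h {w,u}) x) = 2 * h e" if e: "e \<in> E" for e
  proof -
    obtain a b where ab: "e = {a,b}" "a \<noteq> b" using edge_in_E e by blast
    have "{x \<in> arcs. (\<lambda>(w,u). {w,u}) x = e} = {(a,b),(b,a)}"
      using ab e arcs_iff by (auto simp: doubleton_eq_iff insert_commute)
    then show ?thesis using ab by (simp add: insert_commute)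
  qed
  have "(\<Sum>(w,u)\<in>arcs. h {w,u}) = (\<Sum>e\<in>(\<lambda>(w,u). {w,u}) ` arcs. \<Sum>x\<in>{x \<in> arcs. (\<lambda>(w,u). {w,u}) x = e}. (\<lambda>(w,u). h {w,u}) x)"
    by (rule sum.image_gen[OF fin_arcs])
  also have "\<dots> = (\<Sum>e\<in>E. 2 * h e)" unfolding img by (rule sum.cong) (auto simp: fib)
  finally show ?thesis by (simp add: sum_distrib_left[symmetric])
qed

end

context gctx2
begin

lemma sum_bvec: "(\<Sum>w\<in>N. \<phi> w * bvec s0 s1 w) = \<phi> s0 - \<phi> s1"
proof -
  have "(\<Sum>w\<in>N. \<phi> w * bvec s0 s1 w) = (\<Sum>w\<in>N. (if w = s0 then \<phi> w else 0) - (if w = s1 then \<phi> w else 0))"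
    by (rule sum.cong) (auto simp: bvec_def s01)
  also have "\<dots> = \<phi> s0 - \<phi> s1" by (simp add: sum_subtractf finN s0N s1N)
  finally show ?thesis .
qed

lemma flow_identity:
  assumes anti: "\<And>w u. (w,u) \<in> arcs \<Longrightarrow> G u w = - G w u"
    and cons: "\<And>w. w \<in> N \<Longrightarrow> (\<Sum>u\<in>nbr w. G w u) = bvec s0 s1 w"
  shows "(\<Sum>(w,u)\<in>arcs. (\<phi> w - \<phi> u) * G w u) = 2 * (\<phi> s0 - \<phi> s1)"
proof -
  have s1: "(\<Sum>(w,u)\<in>arcs. \<phi> w * G w u) = \<phi> s0 - \<phi> s1"
  proof -
    have "(\<Sum>(w,u)\<in>arcs. \<phi> w * G w u) = (\<Sum>w\<in>N. \<Sum>u\<in>nbr w. \<phi> w * G w u)" by (rule sum_arcs_Sigma)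
    also have "\<dots> = (\<Sum>w\<in>N. \<phi> w * bvec s0 s1 w)" by (rule sum.cong) (auto simp: sum_distrib_left[symmetric] cons)
    finally show ?thesis using sum_bvec by simp
  qed
  have s2: "(\<Sum>(w,u)\<in>arcs. \<phi> u * G w u) = - (\<Sum>(w,u)\<in>arcs. \<phi> w * G w u)"
  proof -
    have "(\<Sum>(w,u)\<in>arcs. \<phi> u * G w u) = (\<Sum>(w,u)\<in>arcs. \<phi> w * G u w)" by (rule sum_arcs_swap)
    also have "\<dots> = (\<Sum>(w,u)\<in>arcs. - (\<phi> w * G w u))" by (rule sum.cong) (auto simp: anti)
    also have "\<dots> = - (\<Sum>(w,u)\<in>arcs. \<phi> w * G w u)" by (simp add: sum_negf[symmetric] case_prod_beta)
    finally show ?thesis .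
  qed
  have "(\<Sum>(w,u)\<in>arcs. (\<phi> w - \<phi> u) * G w u) = (\<Sum>(w,u)\<in>arcs. \<phi> w * G w u) - (\<Sum>(w,u)\<in>arcs. \<phi> u * G w u)"
    by (simp add: sum_subtractf[symmetric] case_prod_beta left_diff_distrib)
  then show ?thesis using s1 s2 by simp
qed

end


context gctx2
begin

definition "slack w u = 2 * L {w,u} - (dd w - dd u) - (d0 u - d0 w)"

lemma slack_nonneg: "(w,u) \<in> arcs \<Longrightarrow> slack w u \<ge> 0"
  using dd_lip[of w u] d0_lip[of w u] arcs_iff by (auto simp: slack_def abs_le_iff insert_commute)

lemma slack_pos: "(w,u) \<in> arcs \<Longrightarrow> \<not> TT w u \<Longrightarrow> slack w u > 0"
  using dd_lip[of w u] d0_lip[of w u] arcs_iff by (auto simp: slack_def abs_le_iff TT_def insert_commute)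

lemma slack_le: "(w,u) \<in> arcs \<Longrightarrow> slack w u \<le> 4 * L {w,u}"
  using dd_lip[of w u] d0_lip[of w u] arcs_iff by (auto simp: slack_def abs_le_iff insert_commute)

definition "kap = Min (insert 1 ((\<lambda>(w,u). slack w u) ` {a \<in> arcs. (\<lambda>(w,u). slack w u) a > 0}))"

lemma kap_pos: "kap > 0"
proof -
  have "finite (insert 1 ((\<lambda>(w,u). slack w u) ` {a \<in> arcs. (\<lambda>(w,u). slack w u) a > 0}))"
    using fin_arcs by auto
  then show ?thesis unfolding kap_def by (subst Min_gr_iff) auto
qed

lemma kap_le: "(w,u) \<in> arcs \<Longrightarrow> slack w u > 0 \<Longrightarrow> kap \<le> slack w u"
  unfolding kap_def using fin_arcs by (intro Min_le) (auto intro!: image_eqI[of _ _ "(w,u)"])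

end

locale sctx = gctx2 +
  fixes D and p
  assumes Dpos: "\<forall>e\<in>E. D e > 0" and pot: "is_potential N E L D s0 s1 p"
begin

definition "F w u = (p w - p u) * D {w,u} / L {w,u}"
definition "Q e = current L D p e"
definition "En = (\<Sum>e\<in>E. L e * (Q e)\<^sup>2 / D e)"
definition "Acost = (\<Sum>e\<in>E. L e * \<bar>Q e\<bar>)"
definition "cc = (\<Sum>e\<in>E. L e * D e)"

lemma F_anti: "F u w = - F w u"
proof -
  have c: "{u,w} = {w,u}" by auto
  have "F u w = (p u - p w) * D {w,u} / L {w,u}" unfolding F_def c ..
  also have "\<dots> = - ((p w - p u) * D {w,u} / L {w,u})" by (metis minus_diff_eq mult_minus_left minus_divide_left)
  finally show ?thesis by (simp add: F_def)
qed

lemma p_s1: "p s1 = 0" using pot by (simp add: is_potential_def)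

lemma cons: assumes w: "w \<in> N" shows "(\<Sum>u\<in>nbr w. F w u) = bvec s0 s1 w"
proof -
  have "(\<Sum>u\<in>nbr w. F w u) = (\<Sum>u\<in>{u\<in>N. {u,w}\<in>E}. (p w - p u) * D {u,w} / L {u,w})"
    unfolding nbr_def F_def by (rule sum.cong) (auto simp: insert_commute)
  also have "\<dots> = bvec s0 s1 w" using pot w unfolding is_potential_def by blast
  finally show ?thesis .
qed

lemma Q_arc: assumes "(w,u) \<in> arcs" shows "\<bar>Q {w,u}\<bar> = \<bar>F w u\<bar>" "(Q {w,u})\<^sup>2 = (F w u)\<^sup>2"
proof -
  have wu: "w \<noteq> u" using assms arcs_iff edge_ends by blast
  have ex: "\<exists>uv. {w,u} = {fst uv, snd uv} \<and> fst uv \<noteq> snd uv" using wu by (intro exI[of _ "(w,u)"]) auto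
  define xy where "xy = orient {w,u}"
  have "{w,u} = {fst xy, snd xy} \<and> fst xy \<noteq> snd xy"
    unfolding xy_def orient_def by (rule someI_ex[OF ex])
  then have xy: "xy = (w,u) \<or> xy = (u,w)" by (cases xy) (auto simp: doubleton_eq_iff)
  have Qd: "Q {w,u} = D {w,u} * (p (fst xy) - p (snd xy)) / L {w,u}"
    by (simp add: Q_def current_def xy_def)
  have c: "{u,w} = {w,u}" by auto
  have "Q {w,u} = F w u \<or> Q {w,u} = F u w"
  proof (cases "xy = (w,u)")
    case True then show ?thesis using Qd by (simp add: F_def mult.commute)
  next
    case False then have "xy = (u,w)" using xy by blast
    then show ?thesis using Qd by (simp add: F_def c mult.commute)
  qed
  then show "\<bar>Q {w,u}\<bar> = \<bar>F w u\<bar>" "(Q {w,u})\<^sup>2 = (F w u)\<^sup>2" using F_anti[of w u] by auto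
qed

lemma Fflow: "(\<Sum>(w,u)\<in>arcs. (\<phi> w - \<phi> u) * F w u) = 2 * (\<phi> s0 - \<phi> s1)"
  by (rule flow_identity, rule F_anti, rule cons, assumption)

lemma arcD: "(w,u) \<in> arcs \<Longrightarrow> {w,u} \<in> E \<and> D {w,u} > 0 \<and> L {w,u} > 0"
  using arcs_iff Dpos Lpos by auto

lemma En_eq: "En = p s0"
proof -
  have "En = (\<Sum>(w,u)\<in>arcs. L {w,u} * (Q {w,u})\<^sup>2 / D {w,u}) / 2"
    unfolding En_def by (rule edge_arc_sum)
  also have "(\<Sum>(w,u)\<in>arcs. L {w,u} * (Q {w,u})\<^sup>2 / D {w,u}) = (\<Sum>(w,u)\<in>arcs. (p w - p u) * F w u)"
  proof (rule sum.cong[OF refl], clarify)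
    fix w u assume a: "(w,u) \<in> arcs"
    then have "L {w,u} > 0" "D {w,u} > 0" using arcD by auto
    then show "L {w,u} * (Q {w,u})\<^sup>2 / D {w,u} = (p w - p u) * F w u"
      using Q_arc(2)[OF a] by (simp add: F_def power2_eq_square field_simps)
  qed
  also have "\<dots> = 2 * (p s0 - p s1)" by (rule Fflow)
  finally show ?thesis using p_s1 by simp
qed

lemma Acost_arcs: "Acost = (\<Sum>(w,u)\<in>arcs. L {w,u} * \<bar>F w u\<bar>) / 2"
proof -
  have "Acost = (\<Sum>(w,u)\<in>arcs. L {w,u} * \<bar>Q {w,u}\<bar>) / 2" unfolding Acost_def by (rule edge_arc_sum)
  also have "(\<Sum>(w,u)\<in>arcs. L {w,u} * \<bar>Q {w,u}\<bar>) = (\<Sum>(w,u)\<in>arcs. L {w,u} * \<bar>F w u\<bar>)"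
    by (rule sum.cong) (auto simp: Q_arc)
  finally show ?thesis .
qed

lemma dd_flow: "(\<Sum>(w,u)\<in>arcs. (dd w - dd u) * F w u) = 2 * Ls"
  using Fflow[of dd] dd_s0 dd_s1 by simp

lemma d0_flow: "(\<Sum>(w,u)\<in>arcs. (d0 u - d0 w) * F w u) = 2 * Ls"
proof -
  have "(\<Sum>(w,u)\<in>arcs. ((\<lambda>x. - d0 x) w - (\<lambda>x. - d0 x) u) * F w u) = 2 * (- d0 s0 - - d0 s1)"
    by (rule Fflow)
  then show ?thesis using d0_s0 d0_s1 by simp
qed

lemma Ls_le_A: "Ls \<le> Acost"
proof -
  have "(\<Sum>(w,u)\<in>arcs. (dd w - dd u) * F w u) \<le> (\<Sum>(w,u)\<in>arcs. L {w,u} * \<bar>F w u\<bar>)"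
  proof (rule sum_mono, clarify)
    fix w u assume "(w,u) \<in> arcs"
    then have "\<bar>dd w - dd u\<bar> \<le> L {w,u}" using dd_lip arcs_iff by blast
    then have "\<bar>dd w - dd u\<bar> * \<bar>F w u\<bar> \<le> L {w,u} * \<bar>F w u\<bar>" by (simp add: mult_right_mono)
    moreover have "(dd w - dd u) * F w u \<le> \<bar>dd w - dd u\<bar> * \<bar>F w u\<bar>"
      by (simp only: abs_mult[symmetric] abs_ge_self)
    ultimately show "(dd w - dd u) * F w u \<le> L {w,u} * \<bar>F w u\<bar>" by linarith
  qed
  then show ?thesis using dd_flow Acost_arcs by simp
qed

lemma slack_sum: "(\<Sum>(w,u)\<in>arcs. 2 * L {w,u} * \<bar>F w u\<bar> - (dd w - dd u + (d0 u - d0 w)) * F w u)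
    = 4 * (Acost - Ls)"
proof -
  have "(\<Sum>(w,u)\<in>arcs. 2 * L {w,u} * \<bar>F w u\<bar> - (dd w - dd u + (d0 u - d0 w)) * F w u)
     = 2 * (\<Sum>(w,u)\<in>arcs. L {w,u} * \<bar>F w u\<bar>) - (\<Sum>(w,u)\<in>arcs. (dd w - dd u) * F w u)
       - (\<Sum>(w,u)\<in>arcs. (d0 u - d0 w) * F w u)"
    by (simp add: sum_subtractf sum_distrib_left case_prod_beta algebra_simps sum.distrib)
  then show ?thesis using dd_flow d0_flow Acost_arcs by simp
qed

end


context gctx2
begin
definition "tau w u = (if TT w u then 1 else if TT u w then -1 else (0::real))"
end

context sctx
begin

definition "beta w u = (if F w u > 0 \<and> \<not> TT w u then F w u else 0)"

lemma beta_nonneg: "beta w u \<ge> 0" by (simp add: beta_def)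

lemma beta_pt: assumes a: "(w,u) \<in> arcs"
  shows "kap * beta w u \<le> 2 * L {w,u} * \<bar>F w u\<bar> - (dd w - dd u + (d0 u - d0 w)) * F w u"
proof -
  have sl: "slack w u = 2 * L {w,u} - (dd w - dd u) - (d0 u - d0 w)" by (simp add: slack_def)
  have s0: "slack w u \<ge> 0" using slack_nonneg[OF a] .
  have s4: "slack w u \<le> 4 * L {w,u}" using slack_le[OF a] .
  have k: "kap > 0" by (rule kap_pos)
  show ?thesis
  proof (cases "F w u > 0")
    case True
    then have rhs: "2 * L {w,u} * \<bar>F w u\<bar> - (dd w - dd u + (d0 u - d0 w)) * F w u = slack w u * F w u"
      using True by (simp add: sl algebra_simps)
    show ?thesis
    proof (cases "TT w u")
      case True then show ?thesis using rhs s0 \<open>F w u > 0\<close> by (simp add: beta_def)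
    next
      case False
      then have "kap \<le> slack w u" using kap_le[OF a] slack_pos[OF a] by blast
      then have "kap * F w u \<le> slack w u * F w u" using \<open>F w u > 0\<close> by (simp add: mult_right_mono)
      then show ?thesis using rhs False \<open>F w u > 0\<close> by (simp add: beta_def)
    qed
  next
    case False
    then have rhs: "2 * L {w,u} * \<bar>F w u\<bar> - (dd w - dd u + (d0 u - d0 w)) * F w u
        = (- F w u) * (4 * L {w,u} - slack w u)"
      using False by (simp add: sl algebra_simps)
    have "(- F w u) * (4 * L {w,u} - slack w u) \<ge> 0" using False s4 by (intro mult_nonneg_nonneg) auto
    then show ?thesis using rhs False by (simp add: beta_def)
  qed
qed

lemma beta_sum: "kap * (\<Sum>(w,u)\<in>arcs. beta w u) \<le> 4 * (Acost - Ls)"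
proof -
  have "kap * (\<Sum>(w,u)\<in>arcs. beta w u) = (\<Sum>(w,u)\<in>arcs. kap * beta w u)"
    by (simp add: sum_distrib_left case_prod_beta)
  also have "\<dots> \<le> (\<Sum>(w,u)\<in>arcs. 2 * L {w,u} * \<bar>F w u\<bar> - (dd w - dd u + (d0 u - d0 w)) * F w u)"
    by (rule sum_mono) (use beta_pt in auto)
  finally show ?thesis using slack_sum by simp
qed

lemma beta_sum_nonneg: "(\<Sum>(w,u)\<in>arcs. beta w u) \<ge> 0"
  by (rule sum_nonneg) (auto simp: beta_nonneg)

lemma res_term: assumes a: "(w,u) \<in> arcs"
  shows "\<bar>tau w u * \<bar>F w u\<bar> - F w u\<bar> \<le> 2 * (beta w u + beta u w)"
proof -
  have fa: "F u w = - F w u" by (rule F_anti)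
  show ?thesis
  proof (cases "TT w u")
    case True
    then have "\<not> TT u w" using TT_asym by blast
    then show ?thesis using True fa by (auto simp: tau_def beta_def)
  next
    case nT: False
    show ?thesis
    proof (cases "TT u w")
      case True
      then show ?thesis using nT fa by (auto simp: tau_def beta_def)
    next
      case False
      then show ?thesis using nT fa by (auto simp: tau_def beta_def)
    qed
  qed
qed

lemma nonT_bound: "\<not> TT w u \<Longrightarrow> \<not> TT u w \<Longrightarrow> \<bar>F w u\<bar> \<le> beta w u + beta u w"
  using F_anti[of u w] by (auto simp: beta_def)

lemma nbr_arcs: "u \<in> nbr w \<Longrightarrow> (w,u) \<in> arcs"
  by (auto simp: nbr_def arcs_iff)

lemma beta_local: assumes w: "w \<in> N"
  shows "(\<Sum>u\<in>nbr w. beta w u + beta u w) \<le> 2 * (\<Sum>(w,u)\<in>arcs. beta w u)"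
proof -
  have g: "(\<Sum>u\<in>nbr w. g w u) \<le> (\<Sum>(w,u)\<in>arcs. g w u)" if nn: "\<And>a b. g a b \<ge> 0" for g :: "_ \<Rightarrow> _ \<Rightarrow> real"
  proof -
    have "(\<Sum>u\<in>nbr w. g w u) \<le> (\<Sum>x\<in>N. \<Sum>u\<in>nbr x. g x u)"
      by (rule member_le_sum[OF w, of "\<lambda>x. \<Sum>u\<in>nbr x. g x u"]) (auto intro: sum_nonneg nn simp: finN)
    then show ?thesis using sum_arcs_Sigma[of g] by simp
  qed
  have "(\<Sum>u\<in>nbr w. beta w u) \<le> (\<Sum>(w,u)\<in>arcs. beta w u)" using g[of beta] beta_nonneg by blast
  moreover have "(\<Sum>u\<in>nbr w. beta u w) \<le> (\<Sum>(w,u)\<in>arcs. beta u w)" using g[of "\<lambda>a b. beta b a"] beta_nonneg by blast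
  moreover have "(\<Sum>(w,u)\<in>arcs. beta u w) = (\<Sum>(w,u)\<in>arcs. beta w u)" by (rule sum_arcs_swap[symmetric])
  ultimately show ?thesis by (simp add: sum.distrib)
qed

end


context gctx2
begin

lemma ex_shortest: "\<exists>P. shortest_path E L s0 s1 P"
  using sdist_attained[OF s0N s1N]
  by (auto simp: shortest_path_def path_len_plen)

lemma sp_facts: assumes "shortest_path E L s0 s1 P"
  shows "walk E P" "distinct P" "hd P = s0" "last P = s1" "path_len L P = Ls"
    "(\<Sum>i<length P - 1. L {P ! i, P ! Suc i}) = Ls" "P \<noteq> []"
  using assms by (auto simp: shortest_path_def spath_def Ls_def path_len_def walk_def)

lemma sp_len: assumes "shortest_path E L s0 s1 P" shows "length P \<ge> 2"
proof -
  have "P \<noteq> []" "hd P = s0" "last P = s1" using sp_facts[OF assms] by auto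
  then obtain x xs where Px: "P = x # xs" by (cases P) auto
  show ?thesis
  proof (cases xs)
    case Nil then show ?thesis using Px \<open>hd P = s0\<close> \<open>last P = s1\<close> s01 by simp
  next
    case (Cons y ys) then show ?thesis using Px by simp
  qed
qed

lemma sp_edge: assumes "shortest_path E L s0 s1 P" "i < length P - 1"
  shows "{P ! i, P ! Suc i} \<in> E"
  using sp_facts(1)[OF assms(1)] assms(2) by (simp add: walk_def)

lemma sp_inj: assumes "shortest_path E L s0 s1 P"
  shows "inj_on (\<lambda>i. {P ! i, P ! Suc i}) {..<length P - 1}"
proof (rule inj_onI)
  fix i j assume i: "i \<in> {..<length P - 1}" and j: "j \<in> {..<length P - 1}"
    and eq: "{P ! i, P ! Suc i} = {P ! j, P ! Suc j}"
  have d: "distinct P" using sp_facts[OF assms] by simp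
  have lt: "i < length P" "Suc i < length P" "j < length P" "Suc j < length P" using i j by auto
  from eq have "(P ! i = P ! j \<and> P ! Suc i = P ! Suc j) \<or> (P ! i = P ! Suc j \<and> P ! Suc i = P ! j)"
    by (auto simp: doubleton_eq_iff)
  then show "i = j"
  proof
    assume "P ! i = P ! j \<and> P ! Suc i = P ! Suc j"
    then show "i = j" using d lt nth_eq_iff_index_eq by blast
  next
    assume "P ! i = P ! Suc j \<and> P ! Suc i = P ! j"
    then have "i = Suc j" "Suc i = j" using d lt nth_eq_iff_index_eq by blast+
    then show "i = j" by simp
  qed
qed

lemma Ls_pos: "Ls > 0"
proof -
  obtain P where P: "shortest_path E L s0 s1 P" using ex_shortest by blast
  have "walk E P" "path_len L P = Ls" using sp_facts[OF P] by auto
  moreover have "length P \<ge> 2" using sp_len[OF P] .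
  ultimately have "plen L P > 0" using plen_pos[of E P L] Lpos by (simp add: walk_wk)
  then show ?thesis using \<open>path_len L P = Ls\<close> by (simp add: path_len_plen)
qed

lemma E_ne: "E \<noteq> {}"
proof -
  obtain P where P: "shortest_path E L s0 s1 P" using ex_shortest by blast
  have "{P ! 0, P ! Suc 0} \<in> E" using sp_edge[OF P, of 0] sp_len[OF P] by simp
  then show ?thesis by blast
qed

end

lemma amgm_aux: assumes l: "l > 0" and d: "d > 0" shows "l * \<bar>q\<bar> / d \<le> (l * q\<^sup>2 / d + l / d) / (2::real)"
proof -
  have "2 * \<bar>q\<bar> * 1 \<le> \<bar>q\<bar>\<^sup>2 + 1\<^sup>2" by (rule sum_squares_bound)
  then have h: "2 * \<bar>q\<bar> \<le> q\<^sup>2 + 1" by simp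
  have "(l / d) * (2 * \<bar>q\<bar>) \<le> (l / d) * (q\<^sup>2 + 1)"
    using h l d by (intro mult_left_mono) auto
  moreover have "(l / d) * (2 * \<bar>q\<bar>) = 2 * (l * \<bar>q\<bar> / d)" by simp
  moreover have "(l / d) * (q\<^sup>2 + 1) = 2 * ((l * q\<^sup>2 / d + l / d) / 2)" using d by (simp add: field_simps)
  ultimately show ?thesis by linarith
qed

context sctx
begin

lemma pdiff: assumes a: "(a,b) \<in> arcs" shows "\<bar>p a - p b\<bar> = L {a,b} * \<bar>Q {a,b}\<bar> / D {a,b}"
proof -
  have L: "L {a,b} > 0" and D: "D {a,b} > 0" using arcD[OF a] by auto
  have "\<bar>F a b\<bar> = \<bar>p a - p b\<bar> * (D {a,b} / L {a,b})" using L D by (simp add: F_def abs_mult)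
  then have "L {a,b} * \<bar>Q {a,b}\<bar> / D {a,b} = L {a,b} * (\<bar>p a - p b\<bar> * (D {a,b} / L {a,b})) / D {a,b}"
    using Q_arc(1)[OF a] by simp
  also have "\<dots> = \<bar>p a - p b\<bar>" using L D by (simp add: field_simps)
  finally show ?thesis by simp
qed

lemma cc_pos: "cc > 0"
  unfolding cc_def using E_ne finE Dpos Lpos
  by (intro sum_pos) auto

lemma A_sq: "Acost\<^sup>2 \<le> En * cc"
proof -
  define t where "t = Acost / cc"
  have pt: "L e * (Q e)\<^sup>2 / D e \<ge> 2 * t * (L e * \<bar>Q e\<bar>) - t\<^sup>2 * (L e * D e)" if e: "e \<in> E" for e
  proof -
    have L: "L e > 0" and D: "D e > 0" using e Lpos Dpos by auto
    have "L e * (\<bar>Q e\<bar> - t * D e)\<^sup>2 / D e \<ge> 0" using L D by simp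
    moreover have "L e * (\<bar>Q e\<bar> - t * D e)\<^sup>2 / D e = L e * (Q e)\<^sup>2 / D e - (2 * t * (L e * \<bar>Q e\<bar>) - t\<^sup>2 * (L e * D e))"
      using D by (simp add: power2_eq_square field_simps)
    ultimately show ?thesis by linarith
  qed
  have "En \<ge> (\<Sum>e\<in>E. 2 * t * (L e * \<bar>Q e\<bar>) - t\<^sup>2 * (L e * D e))"
    unfolding En_def by (rule sum_mono) (use pt in auto)
  also have "(\<Sum>e\<in>E. 2 * t * (L e * \<bar>Q e\<bar>) - t\<^sup>2 * (L e * D e)) = 2 * t * Acost - t\<^sup>2 * cc"
    by (simp add: Acost_def cc_def sum_subtractf sum_distrib_left)
  also have "\<dots> = Acost\<^sup>2 / cc" using cc_pos by (simp add: t_def power2_eq_square field_simps)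
  finally show ?thesis using cc_pos by (simp add: pos_divide_le_eq)
qed

context
  fixes P assumes P: "shortest_path E L s0 s1 P"
begin

abbreviation "pe i \<equiv> {P ! i, P ! Suc i}"

lemma pe_arc: "i < length P - 1 \<Longrightarrow> (P ! i, P ! Suc i) \<in> arcs"
  using sp_edge[OF P] arcs_iff by blast

lemma PE1: "p s0 \<le> (\<Sum>i<length P - 1. L (pe i) * \<bar>Q (pe i)\<bar> / D (pe i))"
proof -
  have n: "length P - 1 < length P" using sp_len[OF P] by simp
  have "p s0 - p s1 = p (P ! 0) - p (P ! (length P - 1))"
    using sp_facts[OF P] by (simp add: hd_conv_nth last_conv_nth)
  also have "\<dots> = (\<Sum>i<length P - 1. p (P ! i) - p (P ! Suc i))"
    by (rule sum_lessThan_telescope'[symmetric])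
  also have "\<dots> \<le> (\<Sum>i<length P - 1. L (pe i) * \<bar>Q (pe i)\<bar> / D (pe i))"
  proof (rule sum_mono)
    fix i assume "i \<in> {..<length P - 1}"
    then have "\<bar>p (P ! i) - p (P ! Suc i)\<bar> = L (pe i) * \<bar>Q (pe i)\<bar> / D (pe i)" using pdiff pe_arc by auto
    then show "p (P ! i) - p (P ! Suc i) \<le> L (pe i) * \<bar>Q (pe i)\<bar> / D (pe i)" by linarith
  qed
  finally show ?thesis using p_s1 by simp
qed

lemma PE2: "(\<Sum>i<length P - 1. L (pe i) * (Q (pe i))\<^sup>2 / D (pe i)) \<le> En"
proof -
  have "(\<Sum>i<length P - 1. L (pe i) * (Q (pe i))\<^sup>2 / D (pe i)) = (\<Sum>e\<in>pe ` {..<length P - 1}. L e * (Q e)\<^sup>2 / D e)"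
  proof -
    have "(\<Sum>e\<in>pe ` {..<length P - 1}. L e * (Q e)\<^sup>2 / D e) = sum ((\<lambda>e. L e * (Q e)\<^sup>2 / D e) \<circ> pe) {..<length P - 1}"
      by (rule sum.reindex[OF sp_inj[OF P]])
    then show ?thesis by (simp add: comp_def)
  qed
  also have "\<dots> \<le> En" unfolding En_def
  proof (rule sum_mono2[OF finE])
    show "pe ` {..<length P - 1} \<subseteq> E" using sp_edge[OF P] by auto
    show "0 \<le> L b * (Q b)\<^sup>2 / D b" if "b \<in> E - pe ` {..<length P - 1}" for b
    proof -
      have "L b > 0" "D b > 0" using that Lpos Dpos by auto
      then show ?thesis by simp
    qed
  qed
  finally show ?thesis .
qed

lemma PE3: "En \<le> (\<Sum>i<length P - 1. L (pe i) / D (pe i))"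
proof -
  have "p s0 \<le> (\<Sum>i<length P - 1. L (pe i) * \<bar>Q (pe i)\<bar> / D (pe i))" by (rule PE1)
  also have "\<dots> \<le> (\<Sum>i<length P - 1. (L (pe i) * (Q (pe i))\<^sup>2 / D (pe i) + L (pe i) / D (pe i)) / 2)"
  proof (rule sum_mono)
    fix i assume i: "i \<in> {..<length P - 1}"
    have L: "L (pe i) > 0" and D: "D (pe i) > 0" using arcD pe_arc i by auto
    show "L (pe i) * \<bar>Q (pe i)\<bar> / D (pe i) \<le> (L (pe i) * (Q (pe i))\<^sup>2 / D (pe i) + L (pe i) / D (pe i)) / 2"
      by (rule amgm_aux[OF L D])
  qed
  also have "\<dots> = ((\<Sum>i<length P - 1. L (pe i) * (Q (pe i))\<^sup>2 / D (pe i)) + (\<Sum>i<length P - 1. L (pe i) / D (pe i))) / 2"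
    by (simp only: sum_divide_distrib[symmetric] sum.distrib)
  finally have "p s0 \<le> \<dots>" .
  then have "2 * p s0 \<le> (\<Sum>i<length P - 1. L (pe i) * (Q (pe i))\<^sup>2 / D (pe i)) + (\<Sum>i<length P - 1. L (pe i) / D (pe i))"
    by simp
  then show ?thesis using PE2 En_eq by linarith
qed

end
end


context sctx
begin

lemma D_le_c: "e \<in> E \<Longrightarrow> L e * D e \<le> cc"
  unfolding cc_def using finE Lpos Dpos
  by (intro member_le_sum) (auto intro: less_imp_le)

context
  fixes P assumes P: "shortest_path E L s0 s1 P"
begin

lemma Lsum: "(\<Sum>i<length P - 1. L (pe P i)) = Ls" using sp_facts(6)[OF P] .

lemma pe_pos: "i < length P - 1 \<Longrightarrow> L (pe P i) > 0 \<and> D (pe P i) > 0"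
  using arcD[OF pe_arc[OF P]] by auto

lemma lyap_lower:
  "(\<Sum>i<length P - 1. L (pe P i) * ((\<bar>Q (pe P i)\<bar> - D (pe P i)) / D (pe P i))) - Ls * ((Acost - cc) / cc)
     \<ge> Ls * (Acost - Ls) / cc"
proof -
  define S where "S = (\<Sum>i<length P - 1. L (pe P i) * \<bar>Q (pe P i)\<bar> / D (pe P i))"
  have c: "cc > 0" by (rule cc_pos)
  have "(\<Sum>i<length P - 1. L (pe P i) * ((\<bar>Q (pe P i)\<bar> - D (pe P i)) / D (pe P i)))
      = (\<Sum>i<length P - 1. L (pe P i) * \<bar>Q (pe P i)\<bar> / D (pe P i) - L (pe P i))"
  proof (rule sum.cong[OF refl])
    fix i assume "i \<in> {..<length P - 1}"
    then have "D (pe P i) > 0" using pe_pos by auto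
    then show "L (pe P i) * ((\<bar>Q (pe P i)\<bar> - D (pe P i)) / D (pe P i)) = L (pe P i) * \<bar>Q (pe P i)\<bar> / D (pe P i) - L (pe P i)"
      by (simp add: field_simps)
  qed
  also have "\<dots> = S - Ls" by (simp only: sum_subtractf S_def Lsum)
  finally have e1: "(\<Sum>i<length P - 1. L (pe P i) * ((\<bar>Q (pe P i)\<bar> - D (pe P i)) / D (pe P i))) = S - Ls" .
  have e2: "Ls * ((Acost - cc) / cc) = Ls * Acost / cc - Ls" using c by (simp add: field_simps)
  have S: "S \<ge> En" using PE1[OF P] En_eq by (simp add: S_def)
  have "En \<ge> Acost\<^sup>2 / cc" using A_sq c by (simp add: pos_divide_le_eq)
  moreover have "Acost * (Acost - Ls) / cc = Acost\<^sup>2 / cc - Ls * Acost / cc"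
    using c by (simp add: power2_eq_square field_simps)
  ultimately have "S - Ls * Acost / cc \<ge> Acost * (Acost - Ls) / cc" using S by linarith
  moreover have "Acost * (Acost - Ls) / cc \<ge> Ls * (Acost - Ls) / cc"
    using Ls_le_A Ls_pos c by (intro divide_right_mono mult_right_mono) auto
  ultimately show ?thesis using e1 e2 by linarith
qed

lemma Gval_upper:
  "(\<Sum>i<length P - 1. L (pe P i) * ln (D (pe P i))) - Ls * ln cc \<le> (\<Sum>i<length P - 1. L (pe P i) * (- ln (L (pe P i))))"
proof -
  have "(\<Sum>i<length P - 1. L (pe P i) * ln (D (pe P i))) - Ls * ln cc = (\<Sum>i<length P - 1. L (pe P i) * (ln (D (pe P i)) - ln cc))"
    by (simp add: sum_subtractf right_diff_distrib Lsum[symmetric] sum_distrib_right)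
  also have "\<dots> \<le> (\<Sum>i<length P - 1. L (pe P i) * (- ln (L (pe P i))))"
  proof (rule sum_mono)
    fix i assume i: "i \<in> {..<length P - 1}"
    have L: "L (pe P i) > 0" and D: "D (pe P i) > 0" using pe_pos i by auto
    have "L (pe P i) * D (pe P i) \<le> cc" using D_le_c sp_edge[OF P] i by auto
    then have "ln (L (pe P i) * D (pe P i)) \<le> ln cc" using L D cc_pos by (subst ln_le_cancel_iff) auto
    then have "ln (D (pe P i)) - ln cc \<le> - ln (L (pe P i))" using L D by (simp add: ln_mult)
    then show "L (pe P i) * (ln (D (pe P i)) - ln cc) \<le> L (pe P i) * (- ln (L (pe P i)))"
      using L by (intro mult_left_mono) auto
  qed
  finally show ?thesis .
qed

lemma Dlow: assumes j: "j < length P - 1"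
  shows "L (pe P j) * (ln (D (pe P j)) - ln cc) \<ge>
     ((\<Sum>i<length P - 1. L (pe P i) * ln (D (pe P i))) - Ls * ln cc) - (\<Sum>i<length P - 1. \<bar>L (pe P i) * ln (L (pe P i))\<bar>)"
proof -
  define a where "a i = L (pe P i) * (ln (D (pe P i)) - ln cc)" for i
  define b where "b i = \<bar>L (pe P i) * ln (L (pe P i))\<bar>" for i
  have ab: "a i \<le> b i" if "i < length P - 1" for i
  proof -
    have L: "L (pe P i) > 0" and D: "D (pe P i) > 0" using pe_pos that by auto
    have "L (pe P i) * D (pe P i) \<le> cc" using D_le_c sp_edge[OF P] that by auto
    then have "ln (L (pe P i) * D (pe P i)) \<le> ln cc" using L D cc_pos by (subst ln_le_cancel_iff) auto
    then have "ln (D (pe P i)) - ln cc \<le> - ln (L (pe P i))" using L D by (simp add: ln_mult)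
    then have "a i \<le> L (pe P i) * (- ln (L (pe P i)))" unfolding a_def using L by (intro mult_left_mono) auto
    also have "\<dots> \<le> b i" unfolding b_def by linarith
    finally show ?thesis .
  qed
  have G: "(\<Sum>i<length P - 1. L (pe P i) * ln (D (pe P i))) - Ls * ln cc = (\<Sum>i<length P - 1. a i)"
    by (simp add: a_def sum_subtractf right_diff_distrib Lsum[symmetric] sum_distrib_right)
  have jS: "j \<in> {..<length P - 1}" using j by simp
  have "(\<Sum>i<length P - 1. a i) = a j + (\<Sum>i\<in>{..<length P - 1} - {j}. a i)"
    by (rule sum.remove[OF _ jS]) simp
  moreover have "(\<Sum>i\<in>{..<length P - 1} - {j}. a i) \<le> (\<Sum>i\<in>{..<length P - 1} - {j}. b i)"
    by (rule sum_mono) (use ab in auto)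
  moreover have "(\<Sum>i\<in>{..<length P - 1} - {j}. b i) \<le> (\<Sum>i<length P - 1. b i)"
    by (rule sum_mono2) (auto simp: b_def)
  ultimately show ?thesis using G by (simp add: a_def b_def)
qed

end
end


lemma deriv_at: assumes "(f has_real_derivative f') (at t within {0..})" "0 < t"
  shows "(f has_real_derivative f') (at t)"
proof -
  have "(f has_real_derivative f') (at t within {0<..})"
    by (rule has_field_derivative_subset[OF assms(1)]) auto
  then show ?thesis using at_within_open[of t "{0<..}"] assms(2) by simp
qed


lemma mono_deriv:
  assumes d: "\<And>t. t \<ge> 0 \<Longrightarrow> (y has_real_derivative y' t) (at t within {0..})"
    and nn: "\<And>t. a < t \<Longrightarrow> t < b \<Longrightarrow> y' t \<ge> 0"
    and a: "0 \<le> a" and ab: "a \<le> b"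
  shows "y a \<le> y b"
proof (rule DERIV_nonneg_imp_increasing_open[OF ab])
  fix x assume x: "a < x" "x < b"
  then have "(y has_real_derivative y' x) (at x)" using deriv_at[OF d] a by auto
  then show "\<exists>z. (y has_real_derivative z) (at x) \<and> 0 \<le> z" using nn x by blast
next
  have "continuous (at x within {0..}) y" if "x \<in> {0..}" for x
    using DERIV_continuous[OF d] that by auto
  then have "continuous_on {0..} y" by (simp add: continuous_on_eq_continuous_within)
  then show "continuous_on {a..b} y" by (rule continuous_on_subset) (use a in auto)
qed

lemma compare_deriv:
  assumes d: "\<And>t. t \<ge> 0 \<Longrightarrow> (y has_real_derivative y' t) (at t within {0..})"
    and le: "\<And>t. T < t \<Longrightarrow> y' t \<le> - y t + a"
    and T: "0 \<le> T" and t: "T \<le> t"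
  shows "y t \<le> a + exp (- (t - T)) * (y T - a)"
proof -
  define h where "h \<tau> = exp \<tau> * (y \<tau> - a)" for \<tau>
  have hd: "(h has_real_derivative (exp \<tau> * (y \<tau> - a) + exp \<tau> * y' \<tau>)) (at \<tau> within {0..})"
    if "\<tau> \<ge> 0" for \<tau>
    unfolding h_def using d[OF that]
    by (auto intro!: derivative_eq_intros simp: algebra_simps)
  have "(\<lambda>\<tau>. - h \<tau>) T \<le> (\<lambda>\<tau>. - h \<tau>) t"
  proof (rule mono_deriv[OF _ _ T t])
    show "((\<lambda>\<tau>. - h \<tau>) has_real_derivative - (exp \<tau> * (y \<tau> - a) + exp \<tau> * y' \<tau>)) (at \<tau> within {0..})"
      if "\<tau> \<ge> 0" for \<tau> using hd[OF that] by (rule DERIV_minus)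
    show "0 \<le> - (exp \<tau> * (y \<tau> - a) + exp \<tau> * y' \<tau>)" if "T < \<tau>" "\<tau> < t" for \<tau>
    proof -
      have "exp \<tau> * (y \<tau> - a + y' \<tau>) \<le> 0" using le[OF that(1)] by (simp add: mult_nonneg_nonpos)
      then show ?thesis by (simp add: algebra_simps)
    qed
  qed
  then have "exp t * (y t - a) \<le> exp T * (y T - a)" by (simp add: h_def)
  then have "y t - a \<le> exp T * (y T - a) / exp t" by (simp add: field_simps)
  also have "\<dots> = exp (- (t - T)) * (y T - a)" by (simp add: exp_diff exp_minus field_simps)
  finally show ?thesis by simp
qed

lemma mono_sup:
  fixes G :: "real \<Rightarrow> real"
  assumes mono: "\<And>s t. 0 \<le> s \<Longrightarrow> s \<le> t \<Longrightarrow> G s \<le> G t"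
    and bd: "\<And>t. 0 \<le> t \<Longrightarrow> G t \<le> B"
  shows "\<And>t. 0 \<le> t \<Longrightarrow> G t \<le> Sup (G ` {0..})" "(G \<longlongrightarrow> Sup (G ` {0..})) at_top"
proof -
  have bdd: "bdd_above (G ` {0..})" using bd by (intro bdd_aboveI2[of _ _ B]) auto
  show le: "G t \<le> Sup (G ` {0..})" if "0 \<le> t" for t using bdd that by (auto intro: cSup_upper)
  show "(G \<longlongrightarrow> Sup (G ` {0..})) at_top"
  proof (rule tendstoI)
    fix e :: real assume e: "e > 0"
    have "Sup (G ` {0..}) - e < Sup (G ` {0..})" using e by simp
    moreover have ne: "G ` {0..} \<noteq> {}" by auto
    ultimately obtain z where z: "z \<in> G ` {0..}" "Sup (G ` {0..}) - e < z"
      by (rule less_cSupE)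
    then obtain s where s: "s \<in> {0..}" "Sup (G ` {0..}) - e < G s" by auto
    have "\<forall>t\<ge>s. dist (G t) (Sup (G ` {0..})) < e"
    proof (intro allI impI)
      fix t assume "t \<ge> s"
      then have "G s \<le> G t" "G t \<le> Sup (G ` {0..})" using mono s le by auto
      then show "dist (G t) (Sup (G ` {0..})) < e" using s by (simp add: dist_real_def)
    qed
    then show "eventually (\<lambda>t. dist (G t) (Sup (G ` {0..})) < e) at_top"
      by (auto simp: eventually_at_top_linorder)
  qed
qed

lemma exp_neg_bound: "(s::real) \<ge> 0 \<Longrightarrow> exp (- s) \<le> 1 / (1 + s)"
proof -
  assume s: "s \<ge> 0"
  have "1 + s \<le> exp s" by (rule exp_ge_add_one_self)
  then have "1 / exp s \<le> 1 / (1 + s)" using s by (intro divide_left_mono) auto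
  then show ?thesis by (simp add: exp_minus inverse_eq_divide)
qed

lemma residual_conv:
  fixes y f G g :: "real \<Rightarrow> real"
  assumes yd: "\<And>t. t \<ge> 0 \<Longrightarrow> (y has_real_derivative (f t - y t)) (at t within {0..})"
    and Gd: "\<And>t. t \<ge> 0 \<Longrightarrow> (G has_real_derivative g t) (at t within {0..})"
    and gnn: "\<And>t. t > 0 \<Longrightarrow> g t \<ge> 0"
    and fb: "\<And>t. t > 0 \<Longrightarrow> \<bar>f t\<bar> \<le> K * g t"
    and K: "K \<ge> 0"
    and Gb: "\<And>t. 0 \<le> t \<Longrightarrow> G t \<le> B"
  shows "(y \<longlongrightarrow> 0) at_top"
proof -
  have Gmono: "G s \<le> G t" if "0 \<le> s" "s \<le> t" for s t
  proof (rule mono_deriv[OF Gd _ that])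
    fix \<tau> assume "s < \<tau>" "\<tau> < t" then show "0 \<le> g \<tau>" using gnn that by auto
  qed
  define Gs where "Gs = Sup (G ` {0..})"
  have Gle: "G t \<le> Gs" if "0 \<le> t" for t using mono_sup(1)[OF Gmono Gb that] by (simp add: Gs_def)
  have Glim: "(G \<longlongrightarrow> Gs) at_top" using mono_sup(2)[OF Gmono Gb] by (simp add: Gs_def)
  have key: "\<bar>y t\<bar> \<le> K * (Gs - G T) + exp (- (t - T)) * \<bar>y T\<bar>" if T: "0 \<le> T" and t: "T \<le> t" for T t
  proof -
    have up: "\<sigma> * y t \<le> K * (Gs - G T) + exp (- (t - T)) * (\<sigma> * y T)" if \<sigma>: "\<sigma> = 1 \<or> \<sigma> = -1" for \<sigma>
    proof -
      define V where "V \<tau> = \<sigma> * y \<tau> + K * (Gs - G \<tau>)" for \<tau>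
      have Vd: "(V has_real_derivative (\<sigma> * (f \<tau> - y \<tau>) - K * g \<tau>)) (at \<tau> within {0..})" if "\<tau> \<ge> 0" for \<tau>
        unfolding V_def using yd[OF that] Gd[OF that] by (auto intro!: derivative_eq_intros)
      have "V t \<le> K * (Gs - G T) + exp (- (t - T)) * (V T - K * (Gs - G T))"
      proof (rule compare_deriv[OF Vd _ T t])
        fix \<tau> assume \<tau>: "T < \<tau>"
        have "\<sigma> * f \<tau> \<le> \<bar>f \<tau>\<bar>" using \<sigma> by auto
        also have "\<dots> \<le> K * g \<tau>" using fb \<tau> T by auto
        finally have "\<sigma> * f \<tau> \<le> K * g \<tau>" .
        moreover have "K * (Gs - G \<tau>) \<le> K * (Gs - G T)" using Gmono[OF T] \<tau> K by (auto intro: mult_left_mono)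
        ultimately show "\<sigma> * (f \<tau> - y \<tau>) - K * g \<tau> \<le> - V \<tau> + K * (Gs - G T)"
          by (simp add: V_def algebra_simps)
      qed
      moreover have "K * (Gs - G t) \<ge> 0" using Gle T t K by auto
      ultimately show ?thesis by (simp add: V_def)
    qed
    have ex: "exp (- (t - T)) \<ge> 0" by simp
    have "exp (- (t - T)) * y T \<le> exp (- (t - T)) * \<bar>y T\<bar>" by (rule mult_left_mono[OF abs_ge_self ex])
    moreover have "exp (- (t - T)) * (- y T) \<le> exp (- (t - T)) * \<bar>y T\<bar>" by (rule mult_left_mono[OF abs_ge_minus_self ex])
    moreover have "y t \<le> K * (Gs - G T) + exp (- (t - T)) * y T" using up[of 1] by simp
    moreover have "- y t \<le> K * (Gs - G T) + exp (- (t - T)) * (- y T)" using up[of "-1"] by simp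
    ultimately show ?thesis by linarith
  qed
  show ?thesis
  proof (rule tendstoI)
    fix e :: real assume e: "e > 0"
    have "((\<lambda>t. K * (Gs - G t)) \<longlongrightarrow> K * (Gs - Gs)) at_top"
      by (intro tendsto_intros Glim)
    then have "((\<lambda>t. K * (Gs - G t)) \<longlongrightarrow> 0) at_top" by simp
    then have "eventually (\<lambda>t. dist (K * (Gs - G t)) 0 < e / 2) at_top"
      by (rule tendstoD) (use e in simp)
    then obtain T0 where T0: "\<And>t. t \<ge> T0 \<Longrightarrow> \<bar>K * (Gs - G t)\<bar> < e / 2"
      by (auto simp: eventually_at_top_linorder)
    define T where "T = max T0 0"
    have T: "T \<ge> 0" "K * (Gs - G T) < e / 2" using T0[of T] by (auto simp: T_def)
    define c where "c = \<bar>y T\<bar>"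
    have "\<forall>t \<ge> T + 2 * c / e + 1. dist (y t) 0 < e"
    proof (intro allI impI)
      fix t assume t: "t \<ge> T + 2 * c / e + 1"
      have c0: "c \<ge> 0" by (simp add: c_def)
      have "2 * c / e \<ge> 0" using c0 e by simp
      then have tT: "T \<le> t" using t by linarith
      have "exp (- (t - T)) \<le> 1 / (1 + (t - T))" using exp_neg_bound[of "t - T"] tT by simp
      then have "exp (- (t - T)) * c \<le> (1 / (1 + (t - T))) * c" using c0 by (rule mult_right_mono)
      also have "\<dots> = c / (1 + (t - T))" by simp
      also have "\<dots> < e / 2"
      proof -
        have pos: "1 + (t - T) > 0" using tT by simp
        have "c * 2 < e * (1 + (t - T))"
        proof -
          have "2 * c / e < t - T" using t by simp
          then have "2 * c < (t - T) * e" using e by (simp add: divide_less_eq)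
          then show ?thesis using e by (simp add: algebra_simps)
        qed
        then show ?thesis using pos by (simp add: divide_less_eq)
      qed
      finally have "exp (- (t - T)) * c < e / 2" .
      then show "dist (y t) 0 < e" using key[OF T(1) tT] T(2) by (simp add: c_def dist_real_def)
    qed
    then show "eventually (\<lambda>t. dist (y t) 0 < e) at_top" by (auto simp: eventually_at_top_linorder)
  qed
qed


abbreviation "pedge P i \<equiv> {P ! i, P ! Suc i}"

locale dctx = gctx2 +
  fixes D and p
  assumes Dinit: "\<forall>e\<in>E. D 0 e > 0"
    and pot: "\<forall>t\<ge>0. is_potential N E L (D t) s0 s1 (p t)"
    and dyn: "\<forall>t\<ge>0. \<forall>e\<in>E. ((\<lambda>\<tau>. D \<tau> e) has_real_derivative (\<bar>current L (D t) (p t) e\<bar> - D t e)) (at t within {0..})"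
begin

abbreviation "cur t e \<equiv> current L (D t) (p t) e"

lemma dynD: "t \<ge> 0 \<Longrightarrow> e \<in> E \<Longrightarrow> ((\<lambda>\<tau>. D \<tau> e) has_real_derivative (\<bar>cur t e\<bar> - D t e)) (at t within {0..})"
  using dyn by blast

lemma Dpos: assumes t: "t \<ge> 0" and e: "e \<in> E" shows "D t e > 0"
proof -
  have "(\<lambda>\<tau>. - D \<tau> e) t \<le> 0 + exp (- (t - 0)) * ((\<lambda>\<tau>. - D \<tau> e) 0 - 0)"
  proof (rule compare_deriv[of "\<lambda>\<tau>. - D \<tau> e" "\<lambda>\<tau>. - (\<bar>cur \<tau> e\<bar> - D \<tau> e)" 0 0 t])
    show "((\<lambda>\<tau>. - D \<tau> e) has_real_derivative - (\<bar>cur \<tau> e\<bar> - D \<tau> e)) (at \<tau> within {0..})" if "\<tau> \<ge> 0" for \<tau>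
      using dynD[OF that e] by (rule DERIV_minus)
  qed (use t in auto)
  then have "D t e \<ge> exp (- t) * D 0 e" by simp
  moreover have "exp (- t) * D 0 e > 0" using Dinit e by simp
  ultimately show ?thesis by linarith
qed

lemma st: "t \<ge> 0 \<Longrightarrow> sctx N E L s0 s1 (D t) (p t)"
  unfolding sctx_def sctx_axioms_def using gctx2_axioms Dpos pot by auto

definition "cd t = (\<Sum>e\<in>E. L e * D t e)"
definition "Ad t = (\<Sum>e\<in>E. L e * \<bar>cur t e\<bar>)"

lemma cd_eq: "t \<ge> 0 \<Longrightarrow> sctx.cc E L (D t) = cd t"
  using sctx.cc_def[OF st] by (simp add: cd_def)
lemma Ad_eq: "t \<ge> 0 \<Longrightarrow> sctx.Acost E L (D t) (p t) = Ad t"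
  using sctx.Acost_def[OF st] sctx.Q_def[OF st] by (simp add: Ad_def)
lemma Q_eq: "t \<ge> 0 \<Longrightarrow> sctx.Q L (D t) (p t) e = cur t e"
  using sctx.Q_def[OF st] by simp

lemma cd_pos: "t \<ge> 0 \<Longrightarrow> cd t > 0" using sctx.cc_pos[OF st] cd_eq by simp

lemma cd_deriv: assumes t: "t \<ge> 0" shows "(cd has_real_derivative (Ad t - cd t)) (at t within {0..})"
proof -
  have "((\<lambda>\<tau>. \<Sum>e\<in>E. L e * D \<tau> e) has_real_derivative (\<Sum>e\<in>E. L e * (\<bar>cur t e\<bar> - D t e))) (at t within {0..})"
    by (rule DERIV_sum, rule DERIV_cmult, rule dynD[OF t]) 
  moreover have "(\<Sum>e\<in>E. L e * (\<bar>cur t e\<bar> - D t e)) = Ad t - cd t"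
    by (simp add: Ad_def cd_def sum_subtractf right_diff_distrib)
  ultimately show ?thesis unfolding cd_def[abs_def] by simp
qed

definition "P0 = (SOME P. shortest_path E L s0 s1 P)"
lemma P0: "shortest_path E L s0 s1 P0"
  unfolding P0_def using ex_shortest by (rule someI_ex)

definition "nP = length P0 - 1"

lemma pe_E: "i < nP \<Longrightarrow> pedge P0 i \<in> E" using sp_edge[OF P0] by (simp add: nP_def)

definition "Gf t = (\<Sum>i<nP. L (pedge P0 i) * ln (D t (pedge P0 i))) - Ls * ln (cd t)"
definition "gf t = (\<Sum>i<nP. L (pedge P0 i) * ((\<bar>cur t (pedge P0 i)\<bar> - D t (pedge P0 i)) / D t (pedge P0 i)))
   - Ls * ((Ad t - cd t) / cd t)"

lemma ln_deriv: assumes t: "t \<ge> 0" and e: "e \<in> E"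
  shows "((\<lambda>\<tau>. ln (D \<tau> e)) has_real_derivative ((\<bar>cur t e\<bar> - D t e) / D t e)) (at t within {0..})"
  using DERIV_chain2[OF DERIV_ln_divide[OF Dpos[OF t e]] dynD[OF t e]] by simp

lemma Gf_deriv: assumes t: "t \<ge> 0" shows "(Gf has_real_derivative gf t) (at t within {0..})"
proof -
  have h1: "((\<lambda>\<tau>. \<Sum>i<nP. L (pedge P0 i) * ln (D \<tau> (pedge P0 i))) has_real_derivative
      (\<Sum>i<nP. L (pedge P0 i) * ((\<bar>cur t (pedge P0 i)\<bar> - D t (pedge P0 i)) / D t (pedge P0 i)))) (at t within {0..})"
    by (rule DERIV_sum, rule DERIV_cmult, rule ln_deriv[OF t pe_E]) simp
  have h2: "((\<lambda>\<tau>. ln (cd \<tau>)) has_real_derivative ((Ad t - cd t) / cd t)) (at t within {0..})"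
    using DERIV_chain2[OF DERIV_ln_divide[OF cd_pos[OF t]] cd_deriv[OF t]] by simp
  have "((\<lambda>\<tau>. (\<Sum>i<nP. L (pedge P0 i) * ln (D \<tau> (pedge P0 i))) - Ls * ln (cd \<tau>)) has_real_derivative gf t) (at t within {0..})"
    unfolding gf_def by (rule DERIV_diff[OF h1 DERIV_cmult[OF h2]])
  then show ?thesis unfolding Gf_def[abs_def] .
qed

lemma gf_lower: assumes t: "t \<ge> 0" shows "gf t \<ge> Ls * (Ad t - Ls) / cd t"
  using sctx.lyap_lower[OF st[OF t] P0] t by (simp add: Ad_eq cd_eq Q_eq gf_def nP_def)

lemma Ad_ge: "t \<ge> 0 \<Longrightarrow> Ad t \<ge> Ls" using sctx.Ls_le_A[OF st] Ad_eq by simp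

lemma gf_nn: assumes t: "t \<ge> 0" shows "gf t \<ge> 0"
proof -
  have "Ls * (Ad t - Ls) / cd t \<ge> 0" using Ad_ge[OF t] Ls_pos cd_pos[OF t] by simp
  then show ?thesis using gf_lower[OF t] by linarith
qed

lemma Gf_mono: "0 \<le> s \<Longrightarrow> s \<le> t \<Longrightarrow> Gf s \<le> Gf t"
  by (rule mono_deriv[OF Gf_deriv]) (auto intro: gf_nn)

definition "Bup = (\<Sum>i<nP. L (pedge P0 i) * (- ln (L (pedge P0 i))))"
definition "B0 = (\<Sum>i<nP. \<bar>L (pedge P0 i) * ln (L (pedge P0 i))\<bar>)"

lemma Gf_upper: "t \<ge> 0 \<Longrightarrow> Gf t \<le> Bup"
  using sctx.Gval_upper[OF st P0] by (simp add: Gf_def Bup_def cd_eq nP_def)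

definition "mm j = exp ((Gf 0 - B0) / L (pedge P0 j))"
definition "K1 = (\<Sum>j<nP. L (pedge P0 j) / mm j)"

lemma D_low: assumes t: "t \<ge> 0" and j: "j < nP" shows "D t (pedge P0 j) \<ge> cd t * mm j"
proof -
  have L: "L (pedge P0 j) > 0" using Lpos pe_E[OF j] by auto
  have D: "D t (pedge P0 j) > 0" using Dpos[OF t pe_E[OF j]] .
  have c: "cd t > 0" using cd_pos[OF t] .
  have "L (pedge P0 j) * (ln (D t (pedge P0 j)) - ln (cd t)) \<ge> Gf t - B0"
    using sctx.Dlow[OF st[OF t] P0, of j] j t by (simp add: Gf_def B0_def cd_eq nP_def)
  moreover have "Gf t \<ge> Gf 0" using Gf_mono[OF _ t] by simp
  ultimately have "L (pedge P0 j) * (ln (D t (pedge P0 j)) - ln (cd t)) \<ge> Gf 0 - B0" by linarith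
  then have "ln (D t (pedge P0 j)) - ln (cd t) \<ge> (Gf 0 - B0) / L (pedge P0 j)" using L
    by (simp add: divide_le_eq mult.commute)
  then have "exp ((Gf 0 - B0) / L (pedge P0 j)) \<le> exp (ln (D t (pedge P0 j)) - ln (cd t))" by simp
  also have "\<dots> = D t (pedge P0 j) / cd t" using D c by (simp add: exp_diff)
  finally show ?thesis using c by (simp add: mm_def pos_le_divide_eq mult.commute)
qed

lemma mm_pos: "mm j > 0" by (simp add: mm_def)

lemma Ad_bound: assumes t: "t \<ge> 0" shows "Ad t \<le> sqrt K1"
proof -
  have c: "cd t > 0" using cd_pos[OF t] .
  have En: "sctx.En E L (D t) (p t) \<le> (\<Sum>i<nP. L (pedge P0 i) / D t (pedge P0 i))"
    using sctx.PE3[OF st[OF t] P0] by (simp add: nP_def)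
  also have "\<dots> \<le> (\<Sum>i<nP. L (pedge P0 i) / (cd t * mm i))"
  proof (rule sum_mono)
    fix i assume i: "i \<in> {..<nP}"
    have L: "L (pedge P0 i) > 0" using Lpos pe_E i by auto
    show "L (pedge P0 i) / D t (pedge P0 i) \<le> L (pedge P0 i) / (cd t * mm i)"
      using D_low[OF t] i L c mm_pos Dpos[OF t pe_E] by (intro divide_left_mono) auto
  qed
  also have "\<dots> = K1 / cd t" by (simp add: K1_def sum_divide_distrib field_simps)
  finally have "sctx.En E L (D t) (p t) \<le> K1 / cd t" .
  moreover have "(Ad t)\<^sup>2 \<le> sctx.En E L (D t) (p t) * cd t" using sctx.A_sq[OF st[OF t]] Ad_eq cd_eq t by simp
  ultimately have "(Ad t)\<^sup>2 \<le> K1 / cd t * cd t" using c by (smt (verit) mult_right_mono)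
  then have "(Ad t)\<^sup>2 \<le> K1" using c by simp
  moreover have "Ad t \<ge> 0" using Ad_ge[OF t] Ls_pos by simp
  ultimately show ?thesis by (simp add: real_le_rsqrt)
qed

definition "Cb = sqrt K1 + \<bar>cd 0\<bar>"

lemma K1_nn: "K1 \<ge> 0"
  unfolding K1_def
proof (rule sum_nonneg)
  fix j assume "j \<in> {..<nP}"
  then have "L (pedge P0 j) > 0" using Lpos pe_E by auto
  then show "0 \<le> L (pedge P0 j) / mm j" using mm_pos[of j] by simp
qed

lemma cd_upper: assumes t: "t \<ge> 0" shows "cd t \<le> Cb"
proof -
  have "cd t \<le> sqrt K1 + exp (- (t - 0)) * (cd 0 - sqrt K1)"
    by (rule compare_deriv[OF cd_deriv]) (use Ad_bound t in auto)
  also have "\<dots> \<le> sqrt K1 + exp (- t) * \<bar>cd 0\<bar>"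
  proof -
    have "exp (- t) * (cd 0 - sqrt K1) \<le> exp (- t) * \<bar>cd 0\<bar>"
      using cd_pos[of 0] K1_nn by (intro mult_left_mono) auto
    then show ?thesis by simp
  qed
  also have "\<dots> \<le> sqrt K1 + \<bar>cd 0\<bar>"
  proof -
    have "exp (- t) \<le> 1" using t by simp
    then have "exp (- t) * \<bar>cd 0\<bar> \<le> 1 * \<bar>cd 0\<bar>" by (intro mult_right_mono) auto
    then show ?thesis by simp
  qed
  finally show ?thesis by (simp add: Cb_def)
qed

lemma Cb_pos: "Cb > 0" using cd_upper[of 0] cd_pos[of 0] by simp

lemma A_gap: assumes t: "t \<ge> 0" shows "Ad t - Ls \<le> (Cb / Ls) * gf t"
proof -
  have c: "cd t > 0" "cd t \<le> Cb" using cd_pos[OF t] cd_upper[OF t] by auto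
  have nn: "Ad t - Ls \<ge> 0" using Ad_ge[OF t] by simp
  have "Ls * (Ad t - Ls) / Cb \<le> Ls * (Ad t - Ls) / cd t"
    using c nn Ls_pos by (intro divide_left_mono) auto
  then have "Ls * (Ad t - Ls) / Cb \<le> gf t" using gf_lower[OF t] by linarith
  then have "Ls * (Ad t - Ls) \<le> gf t * Cb" using Cb_pos by (simp add: divide_le_eq)
  then have "Ad t - Ls \<le> gf t * Cb / Ls" using Ls_pos by (simp add: le_divide_eq mult.commute)
  then show ?thesis by (simp add: field_simps)
qed

end


context dctx
begin

definition "Kb = 4 * Cb / (kap * Ls)"

lemma Kb_nn: "Kb \<ge> 0" using Cb_pos kap_pos Ls_pos by (simp add: Kb_def)

abbreviation "bt t \<equiv> sctx.beta E L s0 s1 (D t) (p t)"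
abbreviation "Ft t \<equiv> sctx.F L (D t) (p t)"

lemma beta_gf: assumes t: "t \<ge> 0" shows "(\<Sum>(w,u)\<in>arcs. bt t w u) \<le> Kb * gf t"
proof -
  have "kap * (\<Sum>(w,u)\<in>arcs. bt t w u) \<le> 4 * (Ad t - Ls)"
    using sctx.beta_sum[OF st[OF t]] Ad_eq[OF t] by simp
  also have "\<dots> \<le> 4 * ((Cb / Ls) * gf t)" using A_gap[OF t] by simp
  finally have h: "kap * (\<Sum>(w,u)\<in>arcs. bt t w u) \<le> 4 * ((Cb / Ls) * gf t)" .
  define X where "X = 4 * ((Cb / Ls) * gf t)"
  define S where "S = (\<Sum>(w,u)\<in>arcs. bt t w u)"
  have "kap * S \<le> X" using h by (simp add: X_def S_def)
  then have "S \<le> X / kap" using kap_pos by (simp add: pos_le_divide_eq mult.commute)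
  also have "\<dots> = Kb * gf t" using kap_pos Ls_pos by (simp add: X_def Kb_def field_simps)
  finally have "S \<le> Kb * gf t" .
  then show ?thesis by (simp add: S_def)
qed

lemma beta_le_sum: assumes t: "t \<ge> 0" and a: "(w,u) \<in> arcs"
  shows "bt t w u \<le> (\<Sum>(w,u)\<in>arcs. bt t w u)"
proof -
  have "(\<lambda>(w,u). bt t w u) (w,u) \<le> (\<Sum>x\<in>arcs. (\<lambda>(w,u). bt t w u) x)"
    by (rule member_le_sum[OF a]) (auto simp: sctx.beta_nonneg[OF st[OF t]] fin_arcs)
  then show ?thesis by simp
qed

lemma conv_nonT: assumes e: "{a,b} \<in> E" and n1: "\<not> TT a b" and n2: "\<not> TT b a"
  shows "((\<lambda>t. D t {a,b}) \<longlongrightarrow> 0) at_top"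
proof (rule residual_conv[of "\<lambda>t. D t {a,b}" "\<lambda>t. \<bar>cur t {a,b}\<bar>" Gf gf "2 * Kb" Bup])
  show "((\<lambda>t. D t {a,b}) has_real_derivative \<bar>cur t {a,b}\<bar> - D t {a,b}) (at t within {0..})" if "t \<ge> 0" for t
    using dynD[OF that e] .
  show "(Gf has_real_derivative gf t) (at t within {0..})" if "t \<ge> 0" for t using Gf_deriv[OF that] .
  show "gf t \<ge> 0" if "t > 0" for t using gf_nn that by simp
  show "2 * Kb \<ge> 0" using Kb_nn by simp
  show "Gf t \<le> Bup" if "0 \<le> t" for t using Gf_upper that by simp
  show "\<bar>\<bar>cur t {a,b}\<bar>\<bar> \<le> 2 * Kb * gf t" if "t > 0" for t
  proof -
    have t0: "t \<ge> 0" using that by simp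
    have ab: "(a,b) \<in> arcs" "(b,a) \<in> arcs" using e arcs_iff by (auto simp: insert_commute)
    have "\<bar>cur t {a,b}\<bar> = \<bar>Ft t a b\<bar>" using sctx.Q_arc(1)[OF st[OF t0] ab(1)] Q_eq[OF t0] by simp
    also have "\<dots> \<le> bt t a b + bt t b a" using sctx.nonT_bound[OF st[OF t0] n1 n2] .
    also have "\<dots> \<le> 2 * (\<Sum>(w,u)\<in>arcs. bt t w u)" using beta_le_sum[OF t0 ab(1)] beta_le_sum[OF t0 ab(2)] by simp
    also have "\<dots> \<le> 2 * (Kb * gf t)" using beta_gf[OF t0] by simp
    finally show ?thesis by simp
  qed
qed

definition "res w t = (\<Sum>u\<in>nbr w. tau w u * D t {w,u}) - bvec s0 s1 w"

lemma conv_res: assumes w: "w \<in> N" shows "(res w \<longlongrightarrow> 0) at_top"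
proof (rule residual_conv[of "res w" "\<lambda>t. (\<Sum>u\<in>nbr w. tau w u * \<bar>cur t {w,u}\<bar>) - bvec s0 s1 w" Gf gf "4 * Kb" Bup])
  show "(res w has_real_derivative ((\<Sum>u\<in>nbr w. tau w u * \<bar>cur t {w,u}\<bar>) - bvec s0 s1 w) - res w t) (at t within {0..})"
    if t: "t \<ge> 0" for t
  proof -
    have "((\<lambda>\<tau>. (\<Sum>u\<in>nbr w. tau w u * D \<tau> {w,u}) - bvec s0 s1 w) has_real_derivative
        (\<Sum>u\<in>nbr w. tau w u * (\<bar>cur t {w,u}\<bar> - D t {w,u})) - 0) (at t within {0..})"
      by (rule DERIV_diff, rule DERIV_sum, rule DERIV_cmult, rule dynD[OF t])
         (auto simp: nbr_def)
    moreover have "(\<Sum>u\<in>nbr w. tau w u * (\<bar>cur t {w,u}\<bar> - D t {w,u})) - 0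
        = ((\<Sum>u\<in>nbr w. tau w u * \<bar>cur t {w,u}\<bar>) - bvec s0 s1 w) - res w t"
      by (simp add: res_def sum_subtractf right_diff_distrib)
    ultimately show ?thesis unfolding res_def[abs_def] by simp
  qed
  show "(Gf has_real_derivative gf t) (at t within {0..})" if "t \<ge> 0" for t using Gf_deriv[OF that] .
  show "gf t \<ge> 0" if "t > 0" for t using gf_nn that by simp
  show "4 * Kb \<ge> 0" using Kb_nn by simp
  show "Gf t \<le> Bup" if "0 \<le> t" for t using Gf_upper that by simp
  show "\<bar>(\<Sum>u\<in>nbr w. tau w u * \<bar>cur t {w,u}\<bar>) - bvec s0 s1 w\<bar> \<le> 4 * Kb * gf t" if "t > 0" for t
  proof -
    have t0: "t \<ge> 0" using that by simp
    have "(\<Sum>u\<in>nbr w. tau w u * \<bar>cur t {w,u}\<bar>) - bvec s0 s1 w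
        = (\<Sum>u\<in>nbr w. tau w u * \<bar>Ft t w u\<bar>) - (\<Sum>u\<in>nbr w. Ft t w u)"
    proof -
      have "(\<Sum>u\<in>nbr w. tau w u * \<bar>cur t {w,u}\<bar>) = (\<Sum>u\<in>nbr w. tau w u * \<bar>Ft t w u\<bar>)"
      proof (rule sum.cong[OF refl])
        fix u assume "u \<in> nbr w"
        then have "(w,u) \<in> arcs" by (rule sctx.nbr_arcs[OF st[OF t0]])
        then show "tau w u * \<bar>cur t {w,u}\<bar> = tau w u * \<bar>Ft t w u\<bar>"
          using sctx.Q_arc(1)[OF st[OF t0]] Q_eq[OF t0] by simp
      qed
      moreover have "(\<Sum>u\<in>nbr w. Ft t w u) = bvec s0 s1 w" using sctx.cons[OF st[OF t0] w] .
      ultimately show ?thesis by simp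
    qed
    also have "\<dots> = (\<Sum>u\<in>nbr w. tau w u * \<bar>Ft t w u\<bar> - Ft t w u)" by (simp add: sum_subtractf)
    finally have eq: "(\<Sum>u\<in>nbr w. tau w u * \<bar>cur t {w,u}\<bar>) - bvec s0 s1 w = (\<Sum>u\<in>nbr w. tau w u * \<bar>Ft t w u\<bar> - Ft t w u)" .
    have "\<bar>\<Sum>u\<in>nbr w. tau w u * \<bar>Ft t w u\<bar> - Ft t w u\<bar> \<le> (\<Sum>u\<in>nbr w. \<bar>tau w u * \<bar>Ft t w u\<bar> - Ft t w u\<bar>)"
      by (rule sum_abs)
    also have "\<dots> \<le> (\<Sum>u\<in>nbr w. 2 * (bt t w u + bt t u w))"
    proof (rule sum_mono)
      fix u assume "u \<in> nbr w"
      then have "(w,u) \<in> arcs" by (rule sctx.nbr_arcs[OF st[OF t0]])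
      then show "\<bar>tau w u * \<bar>Ft t w u\<bar> - Ft t w u\<bar> \<le> 2 * (bt t w u + bt t u w)"
        by (rule sctx.res_term[OF st[OF t0]])
    qed
    also have "\<dots> = 2 * (\<Sum>u\<in>nbr w. bt t w u + bt t u w)" by (simp add: sum_distrib_left)
    also have "\<dots> \<le> 2 * (2 * (\<Sum>(w,u)\<in>arcs. bt t w u))" using sctx.beta_local[OF st[OF t0] w] by simp
    also have "\<dots> \<le> 4 * (Kb * gf t)" using beta_gf[OF t0] by simp
    finally show ?thesis using eq by simp
  qed
qed

end


context gctx2
begin

definition "hh v = d0 v + dd v"

lemma hh_s0: "hh s0 = Ls" by (simp add: hh_def d0_s0 dd_s0)
lemma hh_s1: "hh s1 = Ls" by (simp add: hh_def d0_s1 dd_s1)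
lemma hh_ge: "v \<in> N \<Longrightarrow> hh v \<ge> Ls" using hsum by (simp add: hh_def)

lemma tau_anti: "tau u w = - tau w u"
  using TT_asym by (auto simp: tau_def)

lemma E0_sub: "E0 E L s0 s1 \<subseteq> E" by (auto simp: E0_def)

lemma E0_hh: assumes "{w,u} \<in> E0 E L s0 s1"
  shows "hh w = Ls \<and> hh u = Ls \<and> (TT w u \<or> TT u w)"
proof -
  obtain a b where ab: "{w,u} = {a,b}" "TT a b" "d0 a + dd a = Ls" using E0_T[OF assms] by blast
  have "hh b = hh a" using TT_h[OF ab(2)] by (simp add: hh_def)
  then show ?thesis using ab by (auto simp: doubleton_eq_iff hh_def)
qed

lemma S_arg:
  assumes xnn: "\<forall>e\<in>E. x e \<ge> 0"
    and cons: "\<forall>w\<in>N. (\<Sum>u\<in>nbr w. tau w u * x {w,u}) = bvec s0 s1 w"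
    and T: "TT a b" and h: "hh a > Ls"
  shows "x {a,b} = 0"
proof -
  define G where "G w u = tau w u * x {w,u}" for w u
  define \<phi> where "\<phi> v = (if hh v > Ls then dd v else 0)" for v
  have anti: "G u w = - G w u" if "(w,u) \<in> arcs" for w u
    by (simp add: G_def tau_anti[of u w] insert_commute)
  have id: "(\<Sum>(w,u)\<in>arcs. (\<phi> w - \<phi> u) * G w u) = 2 * (\<phi> s0 - \<phi> s1)"
  proof (rule flow_identity)
    show "G u w = - G w u" if "(w,u) \<in> arcs" for w u using anti[OF that] .
    show "(\<Sum>u\<in>nbr w. G w u) = bvec s0 s1 w" if "w \<in> N" for w using cons that by (simp add: G_def)
  qed
  then have id0: "(\<Sum>(w,u)\<in>arcs. (\<phi> w - \<phi> u) * G w u) = 0" by (simp add: \<phi>_def hh_s0 hh_s1)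
  have nn: "(\<phi> w - \<phi> u) * G w u \<ge> 0" if a: "(w,u) \<in> arcs" for w u
  proof -
    have e: "{w,u} \<in> E" using a arcs_iff by blast
    have xe: "x {w,u} \<ge> 0" using xnn e by blast
    have Le: "L {w,u} > 0" using Lpos e by blast
    show ?thesis
    proof (cases "TT w u")
      case True
      then have hw: "hh w = hh u" using TT_h by (simp add: hh_def)
      have tw: "tau w u = 1" using True by (simp add: tau_def)
      show ?thesis
      proof (cases "hh w > Ls")
        case True
        then have "\<phi> w - \<phi> u = L {w,u}" using hw \<open>TT w u\<close> by (simp add: \<phi>_def TT_def)
        then show ?thesis using tw xe Le by (simp add: G_def)
      next
        case False then show ?thesis using hw by (simp add: \<phi>_def)
      qed
    next
      case nT: False
      show ?thesis
      proof (cases "TT u w")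
        case True
        then have hw: "hh w = hh u" using TT_h by (simp add: hh_def)
        have tw: "tau w u = -1" using True nT by (simp add: tau_def)
        show ?thesis
        proof (cases "hh w > Ls")
          case True
          then have "\<phi> w - \<phi> u = - L {w,u}" using hw \<open>TT u w\<close> by (simp add: \<phi>_def TT_def insert_commute)
          then show ?thesis using tw xe Le by (simp add: G_def)
        next
          case False then show ?thesis using hw by (simp add: \<phi>_def)
        qed
      next
        case False then show ?thesis using nT by (simp add: tau_def G_def)
      qed
    qed
  qed
  have nn': "\<And>y. y \<in> arcs \<Longrightarrow> 0 \<le> (\<lambda>(w,u). (\<phi> w - \<phi> u) * G w u) y" using nn by auto
  have "\<forall>y\<in>arcs. (\<lambda>(w,u). (\<phi> w - \<phi> u) * G w u) y = 0"
    using sum_nonneg_eq_0_iff[OF fin_arcs nn'] id0 by simp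
  moreover have ab: "(a,b) \<in> arcs" using T arcs_iff by (simp add: TT_def)
  ultimately have z: "(\<phi> a - \<phi> b) * G a b = 0" by auto
  have hb: "hh a = hh b" using TT_h[OF T] by (simp add: hh_def)
  have "\<phi> a - \<phi> b = L {a,b}" using h hb T by (simp add: \<phi>_def TT_def)
  moreover have "L {a,b} > 0" using Lpos T by (simp add: TT_def)
  moreover have "tau a b = 1" using T by (simp add: tau_def)
  ultimately show ?thesis using z by (simp add: G_def)
qed

lemma limit_in_Estar:
  assumes xnn: "\<forall>e\<in>E. x e \<ge> 0"
    and x0: "\<forall>a b. {a,b} \<in> E \<longrightarrow> \<not> TT a b \<longrightarrow> \<not> TT b a \<longrightarrow> x {a,b} = 0"
    and cons: "\<forall>w\<in>N. (\<Sum>u\<in>nbr w. tau w u * x {w,u}) = bvec s0 s1 w"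
  shows "(\<lambda>e. if e \<in> E0 E L s0 s1 then x e else 0) \<in> Estar N E L s0 s1"
    and "\<forall>e\<in>E. (if e \<in> E0 E L s0 s1 then x e else 0) = x e"
proof -
  define y where "y e = (if e \<in> E0 E L s0 s1 then x e else 0)" for e
  show eqx: "\<forall>e\<in>E. (if e \<in> E0 E L s0 s1 then x e else 0) = x e"
  proof
    fix e assume e: "e \<in> E"
    show "(if e \<in> E0 E L s0 s1 then x e else 0) = x e"
    proof (cases "e \<in> E0 E L s0 s1")
      case False
      obtain a b where ab: "e = {a,b}" using edge_in_E e by blast
      have aN: "a \<in> N" and bN: "b \<in> N" using edge_ends e ab by auto
      have "x {a,b} = 0"
      proof (cases "TT a b")
        case True
        have "hh a \<noteq> Ls" using T_E0[OF True] False ab by (auto simp: hh_def)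
        then have "hh a > Ls" using hh_ge[OF aN] by simp
        then show ?thesis using S_arg[OF xnn cons True] by simp
      next
        case nT: False
        show ?thesis
        proof (cases "TT b a")
          case True
          have "hh b \<noteq> Ls" using T_E0[OF True] False ab by (auto simp: hh_def insert_commute)
          then have "hh b > Ls" using hh_ge[OF bN] by simp
          then have "x {b,a} = 0" using S_arg[OF xnn cons True] by simp
          then show ?thesis by (simp add: insert_commute)
        next
          case False then show ?thesis using x0 e ab nT by blast
        qed
      qed
      then show ?thesis using False ab by simp
    qed simp
  qed
  have cons_w: "(\<Sum>u \<in> {u \<in> N. {w, u} \<in> E0 E L s0 s1}.
          (if sdist E L u s1 < sdist E L w s1 then y {w, u} else - y {w, u})) = bvec s0 s1 w"
    if w: "w \<in> N" for w
  proof (cases "hh w > Ls")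
    case True
    have e: "{u \<in> N. {w, u} \<in> E0 E L s0 s1} = {}" using E0_hh True by force
    have b: "bvec s0 s1 w = 0" using True hh_s0 hh_s1 by (auto simp: bvec_def)
    show ?thesis unfolding e b by simp
  next
    case False
    then have hw: "hh w = Ls" using hh_ge[OF w] by simp
    have termw: "(if {w,u} \<in> E0 E L s0 s1 then (if dd u < dd w then x {w,u} else - x {w,u}) else 0)
        = tau w u * x {w,u}" if u: "u \<in> nbr w" for u
    proof (cases "{w,u} \<in> E0 E L s0 s1")
      case True
      then have tt: "TT w u \<or> TT u w" using E0_hh by blast
      show ?thesis
      proof (cases "TT w u")
        case True
        then have "dd u < dd w" "tau w u = 1" using Lpos by (auto simp: TT_def tau_def)
        then show ?thesis using \<open>{w,u} \<in> E0 E L s0 s1\<close> by simp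
      next
        case False
        then have T2: "TT u w" using tt by blast
        then have "\<not> dd u < dd w" "tau w u = -1" using Lpos False by (auto simp: TT_def tau_def insert_commute)
        then show ?thesis using \<open>{w,u} \<in> E0 E L s0 s1\<close> by simp
      qed
    next
      case False
      have "\<not> TT w u" using T_E0[of w u] hw False by (auto simp: hh_def)
      moreover have "\<not> TT u w"
      proof
        assume T2: "TT u w"
        then have "hh u = Ls" using TT_h[OF T2] hw by (simp add: hh_def)
        then have "{u,w} \<in> E0 E L s0 s1" using T_E0[OF T2] by (simp add: hh_def)
        then show False using False by (simp add: insert_commute)
      qed
      ultimately show ?thesis using False by (simp add: tau_def)
    qed
    have "(\<Sum>u \<in> {u \<in> N. {w, u} \<in> E0 E L s0 s1}. (if sdist E L u s1 < sdist E L w s1 then y {w, u} else - y {w, u}))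
        = (\<Sum>u \<in> {u \<in> nbr w. {w, u} \<in> E0 E L s0 s1}. (if dd u < dd w then x {w, u} else - x {w, u}))"
    proof (rule sum.cong)
      show "{u \<in> N. {w, u} \<in> E0 E L s0 s1} = {u \<in> nbr w. {w, u} \<in> E0 E L s0 s1}"
        using E0_sub by (auto simp: nbr_def)
    qed (simp add: y_def dd_def)
    also have "\<dots> = (\<Sum>u \<in> nbr w. (if {w,u} \<in> E0 E L s0 s1 then (if dd u < dd w then x {w,u} else - x {w,u}) else 0))"
      by (rule sum.inter_filter[OF fin_nbr])
    also have "\<dots> = (\<Sum>u \<in> nbr w. tau w u * x {w,u})" by (rule sum.cong[OF refl]) (rule termw)
    also have "\<dots> = bvec s0 s1 w" using cons w by blast
    finally show ?thesis .
  qed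
  have "y \<in> Estar N E L s0 s1"
    unfolding Estar_def
  proof (intro CollectI conjI allI impI ballI)
    fix e show "0 \<le> y e" using xnn E0_sub by (auto simp: y_def)
  next
    fix e assume "e \<notin> E0 E L s0 s1" then show "y e = 0" by (simp add: y_def)
  next
    fix w assume "w \<in> N" then show "(\<Sum>u \<in> {u \<in> N. {w, u} \<in> E0 E L s0 s1}.
          (if sdist E L u s1 < sdist E L w s1 then y {w, u} else - y {w, u})) = bvec s0 s1 w"
      by (rule cons_w)
  qed
  moreover have "y = (\<lambda>e. if e \<in> E0 E L s0 s1 then x e else 0)" by (rule ext) (simp add: y_def)
  ultimately show "(\<lambda>e. if e \<in> E0 E L s0 s1 then x e else 0) \<in> Estar N E L s0 s1" by simp
qed

end


lemma fin_subseq: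
  fixes X :: "nat \<Rightarrow> 'e \<Rightarrow> real"
  assumes fin: "finite S" and bd: "\<forall>k. \<forall>e\<in>S. \<bar>X k e\<bar> \<le> B"
  shows "\<exists>r x. strict_mono r \<and> (\<forall>e\<in>S. (\<lambda>k. X (r k) e) \<longlonglongrightarrow> x e)"
  using fin bd
proof (induction S)
  case empty
  show ?case by (intro exI[of _ id] exI[of _ "\<lambda>e. 0"]) (simp add: strict_mono_def)
next
  case (insert e F)
  then obtain r x where r: "strict_mono r" and x: "\<forall>e'\<in>F. (\<lambda>k. X (r k) e') \<longlonglongrightarrow> x e'" by auto
  define s where "s k = X (r k) e" for k
  obtain f where f: "strict_mono f" "monoseq (\<lambda>n. s (f n))" using seq_monosub by blast
  have "Bseq (\<lambda>n. s (f n))" using insert.prems by (intro BseqI'[of _ B]) (auto simp: s_def)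
  then have "convergent (\<lambda>n. s (f n))" using f(2) by (rule Bseq_monoseq_convergent)
  then have cs: "(\<lambda>n. s (f n)) \<longlonglongrightarrow> lim (\<lambda>n. s (f n))" by (simp add: convergent_LIMSEQ_iff)
  show ?case
  proof (intro exI[of _ "r \<circ> f"] exI[of _ "x(e := lim (\<lambda>n. s (f n)))"] conjI ballI)
    show "strict_mono (r \<circ> f)" using r f(1) by (rule strict_mono_o)
  next
    fix e' assume e': "e' \<in> insert e F"
    show "(\<lambda>k. X ((r \<circ> f) k) e') \<longlonglongrightarrow> (x(e := lim (\<lambda>n. s (f n)))) e'"
    proof (cases "e' = e")
      case True then show ?thesis using cs by (simp add: s_def)
    next
      case False
      then have "e' \<in> F" using e' by simp
      then have "((\<lambda>k. X (r k) e') \<circ> f) \<longlonglongrightarrow> x e'" using x f(1) by (intro LIMSEQ_subseq_LIMSEQ) auto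
      then show ?thesis using False by (simp add: comp_def)
    qed
  qed
qed

context dctx
begin

lemma D_bound: assumes t: "t \<ge> 0" and e: "e \<in> E" shows "\<bar>D t e\<bar> \<le> Cb / L e"
proof -
  have "L e * D t e \<le> cd t" using sctx.D_le_c[OF st[OF t] e] cd_eq[OF t] by simp
  also have "\<dots> \<le> Cb" using cd_upper[OF t] .
  finally have "L e * D t e \<le> Cb" .
  moreover have "L e > 0" using Lpos e by blast
  moreover have "D t e > 0" using Dpos[OF t e] .
  ultimately show ?thesis by (simp add: pos_le_divide_eq mult.commute)
qed

definition "Bd = (\<Sum>e\<in>E. Cb / L e)"

lemma D_bound2: "t \<ge> 0 \<Longrightarrow> e \<in> E \<Longrightarrow> \<bar>D t e\<bar> \<le> Bd"
proof -
  assume t: "t \<ge> 0" and e: "e \<in> E"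
  have "Cb / L e \<le> Bd" unfolding Bd_def
    by (rule member_le_sum[OF e]) (use Cb_pos Lpos finE in \<open>auto intro: divide_nonneg_pos less_imp_le\<close>)
  then show ?thesis using D_bound[OF t e] by linarith
qed

lemma approach: assumes eps: "\<epsilon> > 0"
  shows "\<exists>T. \<forall>t\<ge>T. \<exists>y\<in>Estar N E L s0 s1. \<forall>e\<in>E. \<bar>D t e - y e\<bar> < \<epsilon>"
proof (rule ccontr)
  assume "\<not> ?thesis"
  then have "\<forall>k::nat. \<exists>t\<ge>real k. \<forall>y\<in>Estar N E L s0 s1. \<exists>e\<in>E. \<bar>D t e - y e\<bar> \<ge> \<epsilon>"
    by (auto simp: not_less)
  then obtain tk where tk: "\<And>k. tk k \<ge> real k" "\<And>k. \<forall>y\<in>Estar N E L s0 s1. \<exists>e\<in>E. \<bar>D (tk k) e - y e\<bar> \<ge> \<epsilon>"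
    by metis
  have tk0: "tk k \<ge> 0" for k using tk(1)[of k] by simp
  obtain r x where r: "strict_mono r" and x: "\<forall>e\<in>E. (\<lambda>k. D (tk (r k)) e) \<longlonglongrightarrow> x e"
    using fin_subseq[OF finE, of "\<lambda>k. D (tk k)" Bd] D_bound2 tk0 by blast
  define tr where "tr k = tk (r k)" for k
  have tr0: "tr k \<ge> 0" for k by (simp add: tr_def tk0)
  have trlim: "filterlim tr at_top sequentially"
  proof (rule filterlim_at_top_mono[OF filterlim_real_sequentially])
    show "eventually (\<lambda>k. real k \<le> tr k) sequentially"
    proof (rule always_eventually, rule allI)
      fix k have "real k \<le> real (r k)" using seq_suble[OF r] by simp
      also have "\<dots> \<le> tr k" using tk(1) by (simp add: tr_def)
      finally show "real k \<le> tr k" .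
    qed
  qed
  have xlim: "(\<lambda>k. D (tr k) e) \<longlonglongrightarrow> x e" if "e \<in> E" for e using x that by (simp add: tr_def)
  have comp: "(\<lambda>k. f (tr k)) \<longlonglongrightarrow> l" if "(f \<longlongrightarrow> l) at_top" for f :: "real \<Rightarrow> real" and l
    using filterlim_compose[OF that trlim] .
  have c1: "\<forall>e\<in>E. x e \<ge> 0"
  proof
    fix e assume e: "e \<in> E"
    show "x e \<ge> 0"
      by (rule LIMSEQ_le_const[OF xlim[OF e]]) (use Dpos[OF tr0 e] in \<open>auto intro: less_imp_le\<close>)
  qed
  have c2: "\<forall>a b. {a,b} \<in> E \<longrightarrow> \<not> TT a b \<longrightarrow> \<not> TT b a \<longrightarrow> x {a,b} = 0"
  proof (intro allI impI)
    fix a b assume e: "{a,b} \<in> E" and n1: "\<not> TT a b" and n2: "\<not> TT b a"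
    have "(\<lambda>k. D (tr k) {a,b}) \<longlonglongrightarrow> 0" using comp[OF conv_nonT[OF e n1 n2]] .
    then show "x {a,b} = 0" using xlim[OF e] LIMSEQ_unique by blast
  qed
  have c3: "\<forall>w\<in>N. (\<Sum>u\<in>nbr w. tau w u * x {w,u}) = bvec s0 s1 w"
  proof
    fix w assume w: "w \<in> N"
    have "(\<lambda>k. res w (tr k)) \<longlonglongrightarrow> 0" using comp[OF conv_res[OF w]] .
    moreover have "(\<lambda>k. res w (tr k)) \<longlonglongrightarrow> (\<Sum>u\<in>nbr w. tau w u * x {w,u}) - bvec s0 s1 w"
      unfolding res_def
      by (intro tendsto_intros xlim) (auto simp: nbr_def)
    ultimately have "(\<Sum>u\<in>nbr w. tau w u * x {w,u}) - bvec s0 s1 w = 0" using LIMSEQ_unique by blast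
    then show "(\<Sum>u\<in>nbr w. tau w u * x {w,u}) = bvec s0 s1 w" by simp
  qed
  define y where "y = (\<lambda>e. if e \<in> E0 E L s0 s1 then x e else 0)"
  have yE: "y \<in> Estar N E L s0 s1" using limit_in_Estar(1)[OF c1 c2 c3] by (simp add: y_def)
  have yx: "\<forall>e\<in>E. y e = x e" using limit_in_Estar(2)[OF c1 c2 c3] by (simp add: y_def)
  have "\<forall>e\<in>E. eventually (\<lambda>k. \<bar>D (tr k) e - y e\<bar> < \<epsilon>) sequentially"
  proof
    fix e assume e: "e \<in> E"
    have "(\<lambda>k. D (tr k) e) \<longlonglongrightarrow> y e" using xlim[OF e] yx e by simp
    then have "eventually (\<lambda>k. dist (D (tr k) e) (y e) < \<epsilon>) sequentially" using eps by (rule tendstoD)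
    then show "eventually (\<lambda>k. \<bar>D (tr k) e - y e\<bar> < \<epsilon>) sequentially" by (simp add: dist_real_def)
  qed
  then have "eventually (\<lambda>k. \<forall>e\<in>E. \<bar>D (tr k) e - y e\<bar> < \<epsilon>) sequentially"
    by (rule eventually_ball_finite[OF finE])
  then obtain k where "\<forall>e\<in>E. \<bar>D (tr k) e - y e\<bar> < \<epsilon>" by (auto simp: eventually_sequentially)
  moreover obtain e where "e \<in> E" "\<bar>D (tk (r k)) e - y e\<bar> \<ge> \<epsilon>" using tk(2)[of "r k"] yE by blast
  ultimately show False by (force simp: tr_def)
qed

lemma Estar_ne: "Estar N E L s0 s1 \<noteq> {}"
  using approach[of 1] by auto

end


context gctx2
begin

lemma unique_Estar:
  assumes sp: "shortest_path E L s0 s1 xs" and uq: "\<forall>ys. shortest_path E L s0 s1 ys \<longrightarrow> ys = xs"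
    and yE: "y \<in> Estar N E L s0 s1" and e: "e \<in> E"
  shows "y e = (if e \<in> path_edges xs then 1 else 0)"
proof -
  have E0eq: "E0 E L s0 s1 = path_edges xs"
  proof
    show "E0 E L s0 s1 \<subseteq> path_edges xs" using uq by (auto simp: E0_def)
    show "path_edges xs \<subseteq> E0 E L s0 s1"
    proof
      fix e assume e: "e \<in> path_edges xs"
      then obtain i where "Suc i < length xs" "e = {xs ! i, xs ! Suc i}" using path_edges_nth by blast
      then have "e \<in> E" using sp_edge[OF sp, of i] by simp
      then show "e \<in> E0 E L s0 s1" using sp e by (auto simp: E0_def)
    qed
  qed
  have yzero: "\<And>e. e \<notin> path_edges xs \<Longrightarrow> y e = 0" using yE E0eq by (auto simp: Estar_def)
  have ycons: "\<And>w. w \<in> N \<Longrightarrow> (\<Sum>u \<in> {u \<in> N. {w, u} \<in> path_edges xs}.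
          (if sdist E L u s1 < sdist E L w s1 then y {w, u} else - y {w, u})) = bvec s0 s1 w"
    using yE E0eq by (auto simp: Estar_def)
  have d: "distinct xs" and h: "hd xs = s0" and l: "last xs = s1" and ne: "xs \<noteq> []"
    using sp_facts[OF sp] by auto
  have len: "length xs \<ge> 2" using sp_len[OF sp] .
  have x0: "xs ! 0 = s0" using h ne by (simp add: hd_conv_nth)
  have xn: "xs ! (length xs - 1) = s1" using l ne by (simp add: last_conv_nth)
  have xsN: "\<And>i. i < length xs \<Longrightarrow> xs ! i \<in> N"
  proof -
    fix i assume "i < length xs"
    then have "xs ! i \<in> set xs" by simp
    moreover have "set xs \<subseteq> N" using sp_facts(1)[OF sp] len wk_set by (simp add: walk_wk)
    ultimately show "xs ! i \<in> N" by blast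
  qed
  have nbr_char: "{xs ! i, u} \<in> path_edges xs \<longleftrightarrow> u = xs ! Suc i \<or> (i > 0 \<and> u = xs ! (i - 1))"
    if i: "Suc i < length xs" for i u
  proof
    assume "{xs ! i, u} \<in> path_edges xs"
    then obtain j where j: "Suc j < length xs" "{xs ! i, u} = {xs ! j, xs ! Suc j}" using path_edges_nth by blast
    then have "(xs ! i = xs ! j \<and> u = xs ! Suc j) \<or> (xs ! i = xs ! Suc j \<and> u = xs ! j)"
      by (auto simp: doubleton_eq_iff)
    then show "u = xs ! Suc i \<or> (i > 0 \<and> u = xs ! (i - 1))"
    proof
      assume a: "xs ! i = xs ! j \<and> u = xs ! Suc j"
      then have "i = j" using d i j nth_eq_iff_index_eq by (metis Suc_lessD)
      then show ?thesis using a by simp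
    next
      assume a: "xs ! i = xs ! Suc j \<and> u = xs ! j"
      then have "i = Suc j" using d i j nth_eq_iff_index_eq by (metis Suc_lessD)
      then show ?thesis using a by simp
    qed
  next
    assume "u = xs ! Suc i \<or> (i > 0 \<and> u = xs ! (i - 1))"
    then show "{xs ! i, u} \<in> path_edges xs"
    proof
      assume "u = xs ! Suc i"
      then show ?thesis using i unfolding path_edges_def by auto
    next
      assume a: "i > 0 \<and> u = xs ! (i - 1)"
      then have "{xs ! i, u} = {xs ! (i - 1), xs ! Suc (i - 1)}" by (auto simp: insert_commute)
      moreover have "i - 1 < length xs - 1" using a i by simp
      ultimately show ?thesis unfolding path_edges_def by blast
    qed
  qed
  have ddlt: "dd (xs ! Suc i) < dd (xs ! i)" if "Suc i < length xs" for i
  proof -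
    have "TT (xs ! i) (xs ! Suc i)" using sp_TT[OF sp that] by blast
    then show ?thesis using Lpos by (auto simp: TT_def)
  qed
  have main: "y {xs ! i, xs ! Suc i} = 1" if "Suc i < length xs" for i
    using that
  proof (induction i)
    case 0
    have nc: "\<And>u. ({xs ! 0, u} \<in> path_edges xs) = (u = xs ! 1)"
      using nbr_char[OF 0] by simp
    have m1: "xs ! 1 \<in> N" using xsN 0 by simp
    have A: "{u \<in> N. {xs ! 0, u} \<in> path_edges xs} = {xs ! 1}"
      using nc m1 by blast
    have "(\<Sum>u \<in> {u \<in> N. {xs ! 0, u} \<in> path_edges xs}.
          (if sdist E L u s1 < sdist E L (xs ! 0) s1 then y {xs ! 0, u} else - y {xs ! 0, u})) = bvec s0 s1 (xs ! 0)"
      by (rule ycons[OF xsN]) (use ne in simp)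
    then show ?case unfolding A using ddlt[OF 0] x0 by (simp add: dd_def bvec_def)
  next
    case (Suc i)
    let ?v = "xs ! Suc i"
    have i1: "Suc (Suc i) < length xs" using Suc.prems .
    have IH: "y {xs ! i, xs ! Suc i} = 1" using Suc by simp
    have nc: "\<And>u. ({?v, u} \<in> path_edges xs) = (u = xs ! Suc (Suc i) \<or> u = xs ! i)"
      using nbr_char[OF i1] by simp
    have m1: "xs ! Suc (Suc i) \<in> N" "xs ! i \<in> N" using xsN i1 by auto
    have A: "{u \<in> N. {?v, u} \<in> path_edges xs} = {xs ! Suc (Suc i), xs ! i}"
      using nc m1 by blast
    have neq: "xs ! Suc (Suc i) \<noteq> xs ! i" using nth_eq_iff_index_eq[OF d, of "Suc (Suc i)" i] i1 by simp
    have lt1: "dd (xs ! Suc (Suc i)) < dd ?v" using ddlt[OF i1] .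
    have "dd (xs ! Suc i) < dd (xs ! i)" using ddlt[of i] i1 by simp
    then have lt2: "\<not> dd (xs ! i) < dd ?v" by simp
    have bv: "bvec s0 s1 ?v = 0"
    proof -
      have "?v \<noteq> xs ! 0" using nth_eq_iff_index_eq[OF d, of "Suc i" 0] i1 ne by simp
      moreover have "?v \<noteq> xs ! (length xs - 1)" using nth_eq_iff_index_eq[OF d, of "Suc i" "length xs - 1"] i1 by simp
      ultimately show ?thesis using x0 xn by (simp add: bvec_def)
    qed
    have "(\<Sum>u \<in> {u \<in> N. {?v, u} \<in> path_edges xs}.
          (if sdist E L u s1 < sdist E L ?v s1 then y {?v, u} else - y {?v, u})) = bvec s0 s1 ?v"
      by (rule ycons[OF xsN]) (use i1 in simp)
    then have "y {?v, xs ! Suc (Suc i)} - y {?v, xs ! i} = 0"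
      unfolding A using neq lt1 lt2 bv by (simp add: dd_def)
    moreover have "{?v, xs ! i} = {xs ! i, xs ! Suc i}" by (simp add: insert_commute)
    ultimately show ?case using IH by simp
  qed
  show ?thesis
  proof (cases "e \<in> path_edges xs")
    case True
    then obtain i where "Suc i < length xs" "e = {xs ! i, xs ! Suc i}" using path_edges_nth by blast
    then show ?thesis using main True by simp
  next
    case False then show ?thesis using yzero by simp
  qed
qed

end


theorem mainTheorem1:
  fixes N :: "'v set" and E :: "'v set set" and L :: "'v set \<Rightarrow> real"
    and s0 s1 :: 'v
    and D :: "real \<Rightarrow> 'v set \<Rightarrow> real"
    and p :: "real \<Rightarrow> 'v \<Rightarrow> real"
  assumes graph: "simple_graph N E"
    and conn: "connected_graph N E"
    and src: "s0 \<in> N" and snk: "s1 \<in> N" and dst: "s0 \<noteq> s1"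
    and Lpos: "\<forall>e\<in>E. L e > 0"
    and Dinit: "\<forall>e\<in>E. D 0 e > 0"
    and pot: "\<forall>t\<ge>0. is_potential N E L (D t) s0 s1 (p t)"
    and dyn: "\<forall>t\<ge>0. \<forall>e\<in>E.
       ((\<lambda>\<tau>. D \<tau> e) has_real_derivative (\<bar>current L (D t) (p t) e\<bar> - D t e)) (at t within {0..})"
  shows "(\<forall>q::real. q \<ge> 1 \<longrightarrow>
            ((\<lambda>t. lp_setdist q E (D t) (Estar N E L s0 s1)) \<longlongrightarrow> 0) at_top)
       \<and> ((\<lambda>t. linf_setdist E (D t) (Estar N E L s0 s1)) \<longlongrightarrow> 0) at_top
       \<and> (\<forall>xs. shortest_path E L s0 s1 xs \<and> (\<forall>ys. shortest_path E L s0 s1 ys \<longrightarrow> ys = xs) \<longrightarrow>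
            (\<forall>e\<in>E. ((\<lambda>t. D t e) \<longlongrightarrow> (if e \<in> path_edges xs then 1 else 0)) at_top))"
proof -
  interpret dctx N E L s0 s1 D p
    by (unfold_locales) (use graph conn src snk dst Lpos Dinit pot dyn in auto)
  have cE: "real (card E) \<ge> 1" using finE E_ne by (simp add: Suc_le_eq card_gt_0_iff)
  have lp: "((\<lambda>t. lp_setdist q E (D t) (Estar N E L s0 s1)) \<longlongrightarrow> 0) at_top" if q: "q \<ge> 1" for q
  proof (rule tendstoI)
    fix \<epsilon> :: real assume eps: "\<epsilon> > 0"
    define c where "c = real (card E)"
    have c1: "c \<ge> 1" using cE by (simp add: c_def)
    define \<delta> where "\<delta> = \<epsilon> / (2 * c)"
    have dpos: "\<delta> > 0" using eps c1 by (simp add: \<delta>_def)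
    obtain T where T: "\<forall>t\<ge>T. \<exists>y\<in>Estar N E L s0 s1. \<forall>e\<in>E. \<bar>D t e - y e\<bar> < \<delta>"
      using approach[OF dpos] by blast
    have "\<forall>t\<ge>T. dist (lp_setdist q E (D t) (Estar N E L s0 s1)) 0 < \<epsilon>"
    proof (intro allI impI)
      fix t assume t: "t \<ge> T"
      obtain y where y: "y \<in> Estar N E L s0 s1" "\<forall>e\<in>E. \<bar>D t e - y e\<bar> < \<delta>" using T t by blast
      let ?f = "\<lambda>x. (\<Sum>e\<in>E. \<bar>D t e - x e\<bar> powr q) powr (1 / q)"
      have bdd: "bdd_below (?f ` Estar N E L s0 s1)" by (rule bdd_belowI2[where m=0]) simp
      have up: "lp_setdist q E (D t) (Estar N E L s0 s1) \<le> ?f y"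
        unfolding lp_setdist_def by (rule cInf_lower[OF _ bdd]) (use y in auto)
      have lo: "lp_setdist q E (D t) (Estar N E L s0 s1) \<ge> 0"
        unfolding lp_setdist_def by (rule cInf_greatest) (use Estar_ne in auto)
      have s1: "(\<Sum>e\<in>E. \<bar>D t e - y e\<bar> powr q) \<le> (\<Sum>e\<in>E. \<delta> powr q)"
        by (rule sum_mono, rule powr_mono2) (use q y(2) in \<open>auto intro: less_imp_le\<close>)
      also have "\<dots> = c * \<delta> powr q" by (simp add: c_def)
      finally have s1: "(\<Sum>e\<in>E. \<bar>D t e - y e\<bar> powr q) \<le> c * \<delta> powr q" .
      have "?f y \<le> (c * \<delta> powr q) powr (1 / q)"
        by (rule powr_mono2) (use q s1 in \<open>auto intro: sum_nonneg\<close>)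
      also have "\<dots> = c powr (1 / q) * \<delta>"
        using q dpos c1 by (simp add: powr_mult powr_powr)
      also have "\<dots> \<le> c * \<delta>"
      proof -
        have "c powr (1 / q) \<le> c powr 1" by (rule powr_mono) (use q c1 in auto)
        then show ?thesis using dpos c1 by (intro mult_right_mono) auto
      qed
      also have "\<dots> < \<epsilon>" using eps c1 by (simp add: \<delta>_def)
      finally show "dist (lp_setdist q E (D t) (Estar N E L s0 s1)) 0 < \<epsilon>" using up lo by (simp add: dist_real_def)
    qed
    then show "eventually (\<lambda>t. dist (lp_setdist q E (D t) (Estar N E L s0 s1)) 0 < \<epsilon>) at_top"
      by (auto simp: eventually_at_top_linorder)
  qed
  have linf: "((\<lambda>t. linf_setdist E (D t) (Estar N E L s0 s1)) \<longlongrightarrow> 0) at_top"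
  proof (rule tendstoI)
    fix \<epsilon> :: real assume eps: "\<epsilon> > 0"
    obtain T where T: "\<forall>t\<ge>T. \<exists>y\<in>Estar N E L s0 s1. \<forall>e\<in>E. \<bar>D t e - y e\<bar> < \<epsilon>"
      using approach[OF eps] by blast
    have "\<forall>t\<ge>T. dist (linf_setdist E (D t) (Estar N E L s0 s1)) 0 < \<epsilon>"
    proof (intro allI impI)
      fix t assume t: "t \<ge> T"
      obtain y where y: "y \<in> Estar N E L s0 s1" "\<forall>e\<in>E. \<bar>D t e - y e\<bar> < \<epsilon>" using T t by blast
      let ?f = "\<lambda>x. Max ((\<lambda>e. \<bar>D t e - x e\<bar>) ` E)"
      have nn: "?f x \<ge> 0" for x
      proof -
        obtain e where "e \<in> E" using E_ne by blast
        then have "\<bar>D t e - x e\<bar> \<le> ?f x" using finE by (intro Max_ge) auto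
        then show ?thesis by linarith
      qed
      have bdd: "bdd_below (?f ` Estar N E L s0 s1)" by (rule bdd_belowI2[where m=0]) (use nn in simp)
      have up: "linf_setdist E (D t) (Estar N E L s0 s1) \<le> ?f y"
        unfolding linf_setdist_def by (rule cInf_lower[OF _ bdd]) (use y in auto)
      have lo: "linf_setdist E (D t) (Estar N E L s0 s1) \<ge> 0"
        unfolding linf_setdist_def by (rule cInf_greatest) (use Estar_ne nn in auto)
      have "?f y < \<epsilon>" using y(2) finE E_ne by (subst Max_less_iff) auto
      then show "dist (linf_setdist E (D t) (Estar N E L s0 s1)) 0 < \<epsilon>" using up lo by (simp add: dist_real_def)
    qed
    then show "eventually (\<lambda>t. dist (linf_setdist E (D t) (Estar N E L s0 s1)) 0 < \<epsilon>) at_top"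
      by (auto simp: eventually_at_top_linorder)
  qed
  have uniq: "\<forall>e\<in>E. ((\<lambda>t. D t e) \<longlongrightarrow> (if e \<in> path_edges xs then 1 else 0)) at_top"
    if sp: "shortest_path E L s0 s1 xs" and uq: "\<forall>ys. shortest_path E L s0 s1 ys \<longrightarrow> ys = xs" for xs
  proof
    fix e assume e: "e \<in> E"
    show "((\<lambda>t. D t e) \<longlongrightarrow> (if e \<in> path_edges xs then 1 else 0)) at_top"
    proof (rule tendstoI)
      fix \<epsilon> :: real assume eps: "\<epsilon> > 0"
      obtain T where T: "\<forall>t\<ge>T. \<exists>y\<in>Estar N E L s0 s1. \<forall>e\<in>E. \<bar>D t e - y e\<bar> < \<epsilon>"
        using approach[OF eps] by blast
      have "\<forall>t\<ge>T. dist (D t e) (if e \<in> path_edges xs then 1 else 0) < \<epsilon>"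
      proof (intro allI impI)
        fix t assume t: "t \<ge> T"
        obtain y where y: "y \<in> Estar N E L s0 s1" "\<forall>e\<in>E. \<bar>D t e - y e\<bar> < \<epsilon>" using T t by blast
        have ye: "y e = (if e \<in> path_edges xs then 1 else 0)" using unique_Estar[OF sp uq y(1) e] .
        have "\<bar>D t e - y e\<bar> < \<epsilon>" using y(2) e by blast
        then show "dist (D t e) (if e \<in> path_edges xs then 1 else 0) < \<epsilon>"
          unfolding ye[symmetric] by (simp add: dist_real_def)
      qed
      then show "eventually (\<lambda>t. dist (D t e) (if e \<in> path_edges xs then 1 else 0) < \<epsilon>) at_top"
        unfolding eventually_at_top_linorder by blast
    qed
  qed
  show ?thesis using lp linf uniq by blast
qed


end
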